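(* Let $X^*\in\mathbb{S}^n_{++}$ satisfy $\sum_{j=1}^k m^j_{X^*}Y_j+\big(\sum_{j=1}^k o^j_{X^*}\big)X^*=0$, let $\mathcal{S}=\{X\in\mathbb{S}^n_{++}:\|X\|=\|X^*\|\}$, and for $\hat X\in\mathcal{S}$ and $p\in\mathbb{Z}_{\ge0}$ let $b_{\hat X,p}=\|T_p(\hat X)\|/\|X^*\|$ (so that $T_p(\hat X)=b_{\hat X,p}\hat X'$ with $\hat X'\in\mathcal{S}$). Let $\mathcal{K}\subset\mathcal{S}$ be compact with $X^*\in\mathcal{K}$. Then there exist $I,L>0$ such that for all $\hat X\in\mathcal{K}$ and all integers $p\ge1$, $$|b_{\hat X,p}-1|\le\frac{L}{p}\|\hat X-X^*\|+\frac{I}{p^2}.$$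
   Context: $\mathbb{S}^n_{++}$ denotes the set of real symmetric positive definite $n\times n$ matrices and $\|\cdot\|$ the Frobenius norm. For $X,Y\in\mathbb{S}^n_{++}$ let $\alpha=\lambda_{\min}(YX^{-1})$, $\beta=\lambda_{\max}(YX^{-1})$. For $0<\alpha\le\beta$ and $t\in\mathbb{R}$ set $\varphi_{\alpha\beta}(t)=\frac{\beta^t-\alpha^t}{\beta-\alpha}$ and $\psi_{\alpha\beta}(t)=\frac{\beta\alpha^t-\alpha\beta^t}{\beta-\alpha}$ if $\beta>\alpha$, and $\varphi_{\alpha\beta}(t)=t\alpha^{t-1}$, $\psi_{\alpha\beta}(t)=(1-t)\alpha^t$ if $\beta=\alpha$. The Thompson geodesic is $X*_tY=\varphi_{\alpha\beta}(t)Y+\psi_{\alpha\beta}(t)X$. Fix $k\ge1$ and an ordered tuple $(Y_1,\dots,Y_k)$ in $\mathbb{S}^n_{++}$. For $i\in\mathbb{N}$ let $j(i)\in\{1,\dots,k\}$ with $j(i)\equiv i\pmod k$; $S_i(X)=X*_{\frac{1}{i+1}}Y_{j(i)}$, and for $p\in\mathbb{Z}_{\ge0}$, $T_p=S_{(p+1)k}\circ\cdots\circ S_{pk+1}$. For $1\le j\le k$ and $X\in\mathbb{S}^n_{++}$, with $\alpha=\lambda_{\min}(Y_jX^{-1})$, $\beta=\lambda_{\max}(Y_jX^{-1})$: $m^j_X=\frac{\log\beta-\log\alpha}{\beta-\alpha}$, $o^j_X=\frac{\beta\log\alpha-\alpha\log\beta}{\beta-\alpha}$ if $\beta>\alpha$,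 and $m^j_X=1/\alpha$, $o^j_X=\log\alpha-1$ if $\beta=\alpha$. *)

theory Defs
  imports "HOL-Analysis.Analysis"
begin

text \<open>Real n x n matrices are rendered as real^'n^'n (dimension = CARD('n)).
  The norm on this type is the Euclidean norm of the vector of all n^2 entries,
  i.e. the Frobenius norm.\<close>

definition spd :: "real^'n^'n \<Rightarrow> bool" where
  "spd A \<longleftrightarrow> transpose A = A \<and> (\<forall>x. x \<noteq> 0 \<longrightarrow> x \<bullet> (A *v x) > 0)"

definition eigenvalues_real :: "real^'n^'n \<Rightarrow> real set" where
  "eigenvalues_real A = {l. \<exists>v. v \<noteq> 0 \<and> A *v v = l *s v}"

definition lambda_min :: "real^'n^'n \<Rightarrow> real" where
  "lambda_min A = Min (eigenvalues_real A)"

definition lambda_max :: "real^'n^'n \<Rightarrow> real" where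
  "lambda_max A = Max (eigenvalues_real A)"

definition phi_ab :: "real \<Rightarrow> real \<Rightarrow> real \<Rightarrow> real" where
  "phi_ab a b t = (if b > a then (b powr t - a powr t) / (b - a) else t * a powr (t - 1))"

definition psi_ab :: "real \<Rightarrow> real \<Rightarrow> real \<Rightarrow> real" where
  "psi_ab a b t = (if b > a then (b * a powr t - a * b powr t) / (b - a) else (1 - t) * a powr t)"

definition thompson :: "real^'n^'n \<Rightarrow> real \<Rightarrow> real^'n^'n \<Rightarrow> real^'n^'n" where
  "thompson X t Y = (let a = lambda_min (Y ** matrix_inv X); b = lambda_max (Y ** matrix_inv X)
     in phi_ab a b t *\<^sub>R Y + psi_ab a b t *\<^sub>R X)"

text \<open>j(i) in {1..k} with j(i) = i mod k.\<close>
definition jidx :: "nat \<Rightarrow> nat \<Rightarrow> nat" where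
  "jidx k i = (i + k - 1) mod k + 1"

definition S_map :: "(nat \<Rightarrow> real^'n^'n) \<Rightarrow> nat \<Rightarrow> nat \<Rightarrow> real^'n^'n \<Rightarrow> real^'n^'n" where
  "S_map Ys k i X = thompson X (1 / (real i + 1)) (Ys (jidx k i))"

fun T_part :: "(nat \<Rightarrow> real^'n^'n) \<Rightarrow> nat \<Rightarrow> nat \<Rightarrow> nat \<Rightarrow> real^'n^'n \<Rightarrow> real^'n^'n" where
  "T_part Ys k p 0 X = X"
| "T_part Ys k p (Suc m) X = S_map Ys k (p * k + m + 1) (T_part Ys k p m X)"

definition T_map :: "(nat \<Rightarrow> real^'n^'n) \<Rightarrow> nat \<Rightarrow> nat \<Rightarrow> real^'n^'n \<Rightarrow> real^'n^'n" where
  "T_map Ys k p = T_part Ys k p k"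

definition m_coef :: "(nat \<Rightarrow> real^'n^'n) \<Rightarrow> nat \<Rightarrow> real^'n^'n \<Rightarrow> real" where
  "m_coef Ys j X = (let a = lambda_min (Ys j ** matrix_inv X); b = lambda_max (Ys j ** matrix_inv X)
     in if b > a then (ln b - ln a) / (b - a) else 1 / a)"

definition o_coef :: "(nat \<Rightarrow> real^'n^'n) \<Rightarrow> nat \<Rightarrow> real^'n^'n \<Rightarrow> real" where
  "o_coef Ys j X = (let a = lambda_min (Ys j ** matrix_inv X); b = lambda_max (Ys j ** matrix_inv X)
     in if b > a then (b * ln a - a * ln b) / (b - a) else ln a - 1)"

end

theory Submission
  imports Defs
begin


lemma exp_sub_one_bound: "\<bar>exp (u::real) - 1\<bar> \<le> \<bar>u\<bar> * exp (max u 0)"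
proof (cases "u \<ge> 0")
  case True
  have "1 - u \<le> exp (-u)" using exp_ge_add_one_self[of "-u"] by simp
  hence "exp u * (1 - u) \<le> exp u * exp (-u)" by (intro mult_left_mono) auto
  hence "exp u - u * exp u \<le> 1" by (simp add: exp_minus algebra_simps)
  moreover have "exp u \<ge> 1" using True by simp
  ultimately show ?thesis using True by (simp add: max_def)
next
  case False
  have "1 + u \<le> exp u" using exp_ge_add_one_self[of u] by simp
  moreover have "exp u \<le> 1" using False by simp
  ultimately have "\<bar>exp u - 1\<bar> \<le> \<bar>u\<bar>" using False by linarith
  thus ?thesis using False by (simp add: max_def)
qed

lemma powr_sub_one_bound:
  fixes x t :: real assumes "x > 0" "0 \<le> t" "t \<le> 1"
  shows "\<bar>x powr t - 1\<bar> \<le> t * \<bar>ln x\<bar> * (1 + x)"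
proof -
  have e: "x powr t = exp (t * ln x)" using assms by (simp add: powr_def)
  have "exp (max (t * ln x) 0) \<le> 1 + x"
  proof (cases "ln x \<ge> 0")
    case True
    hence "t * ln x \<le> ln x" using assms by (simp add: mult_left_le_one_le)
    hence "exp (t * ln x) \<le> exp (ln x)" by simp
    moreover have "t * ln x \<ge> 0" using True assms by simp
    ultimately show ?thesis using assms by (simp add: max_def)
  next
    case False
    hence "t * ln x \<le> 0" using assms by (simp add: mult_nonneg_nonpos)
    thus ?thesis using assms by (simp add: max_def)
  qed
  hence "\<bar>exp (t * ln x) - 1\<bar> \<le> \<bar>t * ln x\<bar> * (1 + x)"
    using exp_sub_one_bound[of "t * ln x"]
    by (meson abs_ge_zero mult_left_mono order_trans)
  thus ?thesis using e assms by (simp add: abs_mult)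
qed

definition uf :: "real \<Rightarrow> real \<Rightarrow> real" where "uf t x = x powr t - t * ln x"

definition Cu :: "real \<Rightarrow> real \<Rightarrow> real" where
  "Cu al be = (\<bar>ln al\<bar> + \<bar>ln be\<bar>) * (1 + be) / al"

lemma uf_deriv_bound:
  assumes "0 < al" "al \<le> x" "x \<le> be" "0 \<le> t" "t \<le> 1"
  shows "\<bar>t * x powr (t - 1) - t / x\<bar> \<le> Cu al be * t^2"
proof -
  have x: "x > 0" using assms by linarith
  have eq: "t * x powr (t - 1) - t / x = (t / x) * (x powr t - 1)"
    using x by (simp add: powr_diff field_simps)
  have l: "\<bar>ln x\<bar> \<le> \<bar>ln al\<bar> + \<bar>ln be\<bar>"
  proof -
    have "ln al \<le> ln x" "ln x \<le> ln be" using assms x by auto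
    thus ?thesis by linarith
  qed
  have "\<bar>(t / x) * (x powr t - 1)\<bar> = (t / x) * \<bar>x powr t - 1\<bar>" using x assms by (simp add: abs_mult)
  also have "\<dots> \<le> (t / x) * (t * \<bar>ln x\<bar> * (1 + x))"
    by (rule mult_left_mono[OF powr_sub_one_bound]) (use x assms in auto)
  also have "\<dots> \<le> (t / al) * (t * (\<bar>ln al\<bar> + \<bar>ln be\<bar>) * (1 + be))"
  proof -
    have h1: "t / x \<le> t / al" using assms x by (simp add: frac_le)
    have "\<bar>ln x\<bar> * (1 + x) \<le> (\<bar>ln al\<bar> + \<bar>ln be\<bar>) * (1 + be)"
      by (rule mult_mono) (use l assms x in auto)
    hence h2: "t * \<bar>ln x\<bar> * (1 + x) \<le> t * (\<bar>ln al\<bar> + \<bar>ln be\<bar>) * (1 + be)"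
      using assms by (simp add: mult.assoc mult_left_mono)
    show ?thesis by (rule mult_mono[OF h1 h2]) (use assms x in auto)
  qed
  also have "\<dots> = Cu al be * t^2" by (simp add: Cu_def power2_eq_square)
  finally show ?thesis using eq by simp
qed

lemma uf_lip:
  assumes "0 < al" "al \<le> x" "x \<le> y" "y \<le> be" "0 \<le> t" "t \<le> 1"
  shows "\<bar>uf t y - uf t x\<bar> \<le> Cu al be * t^2 * (y - x)"
proof (cases "x = y")
  case True thus ?thesis by simp
next
  case False
  hence xy: "x < y" using assms by simp
  have "\<And>z. x \<le> z \<Longrightarrow> z \<le> y \<Longrightarrow> DERIV (uf t) z :> (t * z powr (t - 1) - t / z)"
    unfolding uf_def using assms
    by (auto intro!: derivative_eq_intros simp: field_simps)
  from MVT2[OF xy this] obtain z where z: "x < z" "z < y"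
    "uf t y - uf t x = (y - x) * (t * z powr (t - 1) - t / z)" by blast
  have "\<bar>t * z powr (t - 1) - t / z\<bar> \<le> Cu al be * t^2"
    by (rule uf_deriv_bound) (use assms z in auto)
  thus ?thesis using z xy by (simp add: abs_mult mult.commute mult_left_mono)
qed

definition mf :: "real \<Rightarrow> real \<Rightarrow> real" where
  "mf a b = (if b > a then (ln b - ln a) / (b - a) else 1 / a)"

definition ofn :: "real \<Rightarrow> real \<Rightarrow> real" where
  "ofn a b = (if b > a then (b * ln a - a * ln b) / (b - a) else ln a - 1)"

lemma div_comb1: "(c::real) \<noteq> 0 \<Longrightarrow> x / c - k * (y / c) = (x - k * y) / c"
  by (simp add: field_simps)
lemma div_comb2: "(c::real) \<noteq> 0 \<Longrightarrow> x - k * (y / c) = (c * x - k * y) / c"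
  by (simp add: field_simps)

lemma ofn_eq: "a > 0 \<Longrightarrow> ofn a b = ln a - a * mf a b"
proof (cases "b > a")
  case True
  hence d: "b - a \<noteq> 0" by simp
  have "ln a - a * ((ln b - ln a) / (b - a)) = ((b - a) * ln a - a * (ln b - ln a)) / (b - a)"
    using d by (rule div_comb2)
  also have "(b - a) * ln a - a * (ln b - ln a) = b * ln a - a * ln b" by (simp add: algebra_simps)
  finally show ?thesis using True by (simp add: ofn_def mf_def)
qed (simp add: ofn_def mf_def)

lemma powr_m1: "a > 0 \<Longrightarrow> a * a powr (t - 1) = a powr (t::real)"
  by (simp add: powr_diff)

lemma psi_eq: "a > 0 \<Longrightarrow> psi_ab a b t = a powr t - a * phi_ab a b t"
proof (cases "b > a")
  case True
  hence d: "b - a \<noteq> 0" by simp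
  have "a powr t - a * ((b powr t - a powr t) / (b - a)) = ((b - a) * a powr t - a * (b powr t - a powr t)) / (b - a)"
    using d by (rule div_comb2)
  also have "(b - a) * a powr t - a * (b powr t - a powr t) = b * a powr t - a * b powr t" by (simp add: algebra_simps)
  finally show ?thesis using True by (simp add: psi_ab_def phi_ab_def)
next
  case False
  assume a: "a > 0"
  show ?thesis using False powr_m1[OF a, of t] by (simp add: psi_ab_def phi_ab_def algebra_simps)
qed

lemma phi_exp:
  assumes "0 < al" "al \<le> a" "a \<le> b" "b \<le> be" "0 \<le> t" "t \<le> 1"
  shows "\<bar>phi_ab a b t - t * mf a b\<bar> \<le> Cu al be * t^2"
proof (cases "b > a")
  case True
  have d: "b - a \<noteq> 0" using True by simp
  have "phi_ab a b t - t * mf a b = ((b powr t - a powr t) - t * (ln b - ln a)) / (b - a)"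
    using True div_comb1[OF d] by (simp add: phi_ab_def mf_def)
  also have "(b powr t - a powr t) - t * (ln b - ln a) = uf t b - uf t a"
    by (simp add: uf_def algebra_simps)
  finally have "phi_ab a b t - t * mf a b = (uf t b - uf t a) / (b - a)" .
  moreover have "\<bar>uf t b - uf t a\<bar> \<le> Cu al be * t^2 * (b - a)"
    by (rule uf_lip) (use assms in auto)
  ultimately show ?thesis using True by (simp add: divide_le_eq)
next
  case False
  hence "b = a" using assms by simp
  hence "phi_ab a b t - t * mf a b = t * a powr (t - 1) - t / a"
    by (simp add: phi_ab_def mf_def)
  thus ?thesis using uf_deriv_bound[of al a be t] assms by simp
qed

lemma pow_exp:
  assumes "0 < al" "al \<le> 1" "1 \<le> be" "al \<le> a" "a \<le> be" "0 \<le> t" "t \<le> 1"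
  shows "\<bar>a powr t - 1 - t * ln a\<bar> \<le> Cu al be * t^2 * be"
proof -
  have u1: "uf t 1 = 1" by (simp add: uf_def)
  have eq: "a powr t - 1 - t * ln a = uf t a - uf t 1" using u1 by (simp add: uf_def)
  have C0: "Cu al be \<ge> 0" using assms by (simp add: Cu_def)
  show ?thesis
  proof (cases "a \<le> 1")
    case True
    have "\<bar>uf t 1 - uf t a\<bar> \<le> Cu al be * t^2 * (1 - a)"
      by (rule uf_lip) (use assms True in auto)
    moreover have "Cu al be * t^2 * (1 - a) \<le> Cu al be * t^2 * be"
      by (intro mult_left_mono) (use assms C0 in auto)
    ultimately show ?thesis using eq by (simp add: abs_minus_commute)
  next
    case False
    have "\<bar>uf t a - uf t 1\<bar> \<le> Cu al be * t^2 * (a - 1)"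
      by (rule uf_lip) (use assms False in auto)
    moreover have "Cu al be * t^2 * (a - 1) \<le> Cu al be * t^2 * be"
      by (intro mult_left_mono) (use assms C0 in auto)
    ultimately show ?thesis using eq by simp
  qed
qed

lemma psi_exp:
  assumes "0 < al" "al \<le> 1" "1 \<le> be" "al \<le> a" "a \<le> b" "b \<le> be" "0 \<le> t" "t \<le> 1"
  shows "\<bar>psi_ab a b t - 1 - t * ofn a b\<bar> \<le> 2 * Cu al be * be * t^2"
proof -
  have a0: "a > 0" using assms by simp
  have eq: "psi_ab a b t - 1 - t * ofn a b
      = (a powr t - 1 - t * ln a) - a * (phi_ab a b t - t * mf a b)"
    using a0 by (simp add: psi_eq ofn_eq algebra_simps)
  have h1: "\<bar>a powr t - 1 - t * ln a\<bar> \<le> Cu al be * t^2 * be"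
    by (rule pow_exp) (use assms in auto)
  have "\<bar>a * (phi_ab a b t - t * mf a b)\<bar> = a * \<bar>phi_ab a b t - t * mf a b\<bar>"
    using a0 by (simp add: abs_mult)
  also have "\<dots> \<le> be * (Cu al be * t^2)"
    by (rule mult_mono) (use assms phi_exp[of al a b be t] in auto)
  finally have h2: "\<bar>a * (phi_ab a b t - t * mf a b)\<bar> \<le> be * (Cu al be * t^2)" .
  have e2: "Cu al be * t^2 * be + be * (Cu al be * t^2) = 2 * Cu al be * be * t^2" by (simp add: algebra_simps)
  show ?thesis unfolding eq using h1 h2 e2 abs_triangle_ineq4[of "a powr t - 1 - t * ln a" "a * (phi_ab a b t - t * mf a b)"]
    by linarith
qed

lemma phi_psi_pos:
  assumes "0 < a" "a \<le> b" "0 \<le> t" "t \<le> 1"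
  shows "phi_ab a b t \<ge> 0" "psi_ab a b t \<ge> (1 - t) * a powr t"
proof -
  have "phi_ab a b t \<ge> 0 \<and> a * phi_ab a b t \<le> t * a powr t"
  proof (cases "b > a")
    case True
    have "\<And>x. a \<le> x \<Longrightarrow> x \<le> b \<Longrightarrow> DERIV (\<lambda>x. x powr t) x :> t * x powr (t - 1)"
      using assms by (auto intro!: derivative_eq_intros)
    from MVT2[OF True this] obtain z where z: "a < z" "z < b"
      "b powr t - a powr t = (b - a) * (t * z powr (t - 1))" by blast
    have ph: "phi_ab a b t = t * z powr (t - 1)" using True z by (simp add: phi_ab_def)
    have "z powr (t - 1) \<le> a powr (t - 1)" by (rule powr_mono2') (use assms z in auto)
    hence "a * (t * z powr (t - 1)) \<le> a * (t * a powr (t - 1))"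
      using assms by (intro mult_left_mono) auto
    also have "a * (t * a powr (t - 1)) = t * a powr t" using powr_m1[of a t] assms by (simp add: algebra_simps)
    finally show ?thesis using ph assms z by (simp add: algebra_simps)
  next
    case False
    hence "b = a" using assms by simp
    have h: "a * (t * a powr (t - 1)) = t * a powr t" using powr_m1[of a t] assms
      by (metis mult.left_commute)
    have ph: "phi_ab a b t = t * a powr (t - 1)" using \<open>b = a\<close> by (simp add: phi_ab_def)
    have p0: "0 \<le> t * a powr (t - 1)" using assms by simp
    show ?thesis unfolding ph using h p0 by linarith
  qed
  thus "phi_ab a b t \<ge> 0" "psi_ab a b t \<ge> (1 - t) * a powr t"
    using psi_eq[of a b t] assms by (auto simp: algebra_simps)
qed

lemma mf_bounds:
  assumes "0 < al" "al \<le> a" "a \<le> b"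
  shows "0 \<le> mf a b" "mf a b \<le> 1 / al"
proof -
  have "0 \<le> mf a b \<and> mf a b \<le> 1 / a"
  proof (cases "b > a")
    case True
    have "ln (b / a) \<le> b / a - 1" by (rule ln_le_minus_one) (use assms in auto)
    hence "ln b - ln a \<le> (b - a) / a" using assms by (simp add: ln_div field_simps)
    moreover have "ln a \<le> ln b" using assms by simp
    ultimately show ?thesis using True by (simp add: mf_def divide_le_eq field_simps)
  next
    case False thus ?thesis using assms by (simp add: mf_def)
  qed
  moreover have "1 / a \<le> 1 / al" using assms by (simp add: frac_le)
  ultimately show "0 \<le> mf a b" "mf a b \<le> 1 / al" by auto
qed

definition Dl :: "real \<Rightarrow> real \<Rightarrow> real" where
  "Dl x y = (if x = y then 1 / x else (ln y - ln x) / (y - x))"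

lemma Dl_sym: "Dl x y = Dl y x"
  unfolding Dl_def by (auto simp: field_simps)

lemma mf_Dl: "a \<le> b \<Longrightarrow> mf a b = Dl a b"
  unfolding mf_def Dl_def by auto

lemma key_ln:
  assumes "r > (0::real)"
  shows "0 \<le> (r - 1) - ln r" "(r - 1) - ln r \<le> (r - 1)^2 / r"
proof -
  show "0 \<le> (r - 1) - ln r" using ln_le_minus_one[OF assms] by simp
  have "ln (1 / r) \<le> 1 / r - 1" by (rule ln_le_minus_one) (use assms in auto)
  hence "- ln r \<le> 1 / r - 1" using assms by (simp add: ln_div)
  hence "(r - 1) - ln r \<le> (r - 1) + (1 / r - 1)" by simp
  also have "\<dots> = (r - 1)^2 / r" using assms by (simp add: field_simps power2_eq_square)
  finally show "(r - 1) - ln r \<le> (r - 1)^2 / r" .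
qed

lemma key_ln_abs: "r > (0::real) \<Longrightarrow> \<bar>ln r - (r - 1)\<bar> \<le> (r - 1)^2 / r"
  using key_ln[of r] by linarith

lemma Dl_diag:
  assumes "a > 0" "y > 0"
  shows "\<bar>Dl a y - 1 / a\<bar> \<le> \<bar>y - a\<bar> / (a * y)"
proof (cases "y = a")
  case True thus ?thesis by (simp add: Dl_def)
next
  case False
  have r: "y / a > 0" using assms by simp
  have eq: "Dl a y - 1 / a = (ln (y / a) - (y / a - 1)) / (y - a)"
    using False assms by (simp add: Dl_def ln_div field_simps)
  have "\<bar>ln (y / a) - (y / a - 1)\<bar> \<le> (y / a - 1)^2 / (y / a)" by (rule key_ln_abs[OF r])
  also have "\<dots> = (y - a)^2 / (a * y)" using assms by (simp add: field_simps power2_eq_square)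
  finally have h: "\<bar>ln (y / a) - (y / a - 1)\<bar> \<le> (y - a)^2 / (a * y)" .
  have ya: "\<bar>y - a\<bar> > 0" using False by simp
  have "\<bar>Dl a y - 1 / a\<bar> = \<bar>ln (y / a) - (y / a - 1)\<bar> / \<bar>y - a\<bar>" using eq by (simp add: abs_divide)
  also have "\<dots> \<le> ((y - a)^2 / (a * y)) / \<bar>y - a\<bar>" by (rule divide_right_mono[OF h]) simp
  also have "\<dots> = \<bar>y - a\<bar> / (a * y)"
  proof -
    have "(y - a)^2 = \<bar>y - a\<bar> * \<bar>y - a\<bar>" by (simp add: power2_eq_square)
    thus ?thesis using ya assms by (simp add: field_simps)
  qed
  finally show ?thesis .
qed



lemma Dl_deriv_bound:
  fixes a x :: real
  assumes "0 < a" "0 < x" "x \<noteq> a"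
  shows "\<bar>((x - a) / x - (ln x - ln a)) / (x - a)^2\<bar> \<le> 1 / (a * x)"
proof -
  have r: "a / x > 0" by (rule divide_pos_pos) (use assms in auto)
  have e: "(x - a) / x - (ln x - ln a) = - ((a / x - 1) - ln (a / x))"
    using assms by (simp add: ln_div field_simps)
  have "\<bar>(x - a) / x - (ln x - ln a)\<bar> \<le> (a / x - 1)^2 / (a / x)"
    using key_ln[OF r] e by simp
  also have "\<dots> = (x - a)^2 / (a * x)" using assms by (simp add: field_simps power2_eq_square)
  finally have h: "\<bar>(x - a) / x - (ln x - ln a)\<bar> \<le> (x - a)^2 / (a * x)" .
  have p: "(x - a)^2 > 0" using assms by simp
  have "\<bar>((x - a) / x - (ln x - ln a)) / (x - a)^2\<bar> = \<bar>(x - a) / x - (ln x - ln a)\<bar> / (x - a)^2"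
    by (simp add: abs_divide)
  also have "\<dots> \<le> ((x - a)^2 / (a * x)) / (x - a)^2" by (rule divide_right_mono[OF h]) simp
  also have "\<dots> = 1 / (a * x)" using p by simp
  finally show ?thesis .
qed

lemma sq_bound: "0 < (al::real) \<Longrightarrow> al \<le> a \<Longrightarrow> al \<le> x \<Longrightarrow> 1 / (a * x) \<le> 1 / al^2"
proof -
  assume h: "0 < al" "al \<le> a" "al \<le> x"
  have "al * al \<le> a * x" by (rule mult_mono) (use h in auto)
  thus "1 / (a * x) \<le> 1 / al^2" using \<open>0 < al\<close> by (simp add: power2_eq_square frac_le)
qed

lemma Dl_lip1_ord:
  assumes "0 < al" "al \<le> a" "al \<le> y" "y \<le> z"
  shows "\<bar>Dl a y - Dl a z\<bar> \<le> (z - y) / al^2"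
proof (cases "y \<le> a \<and> a \<le> z")
  case True
  have h1: "\<bar>Dl a y - 1 / a\<bar> \<le> (a - y) / al^2"
  proof -
    have "\<bar>Dl a y - 1 / a\<bar> \<le> \<bar>y - a\<bar> / (a * y)" by (rule Dl_diag) (use assms in auto)
    also have "\<dots> = \<bar>y - a\<bar> * (1 / (a * y))" by simp
    also have "\<dots> \<le> (a - y) * (1 / al^2)"
      by (rule mult_mono) (use True assms sq_bound[of al a y] in auto)
    finally show ?thesis by simp
  qed
  have h2: "\<bar>Dl a z - 1 / a\<bar> \<le> (z - a) / al^2"
  proof -
    have "\<bar>Dl a z - 1 / a\<bar> \<le> \<bar>z - a\<bar> / (a * z)" by (rule Dl_diag) (use assms in auto)
    also have "\<dots> = \<bar>z - a\<bar> * (1 / (a * z))" by simp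
    also have "\<dots> \<le> (z - a) * (1 / al^2)"
      by (rule mult_mono) (use True assms sq_bound[of al a z] in auto)
    finally show ?thesis by simp
  qed
  have "(a - y) / al^2 + (z - a) / al^2 = ((a - y) + (z - a)) / al^2" by (rule add_divide_distrib[symmetric])
  hence "(a - y) / al^2 + (z - a) / al^2 = (z - y) / al^2" by simp
  thus ?thesis using h1 h2 by linarith
next
  case False
  show ?thesis
  proof (cases "y = z")
    case True thus ?thesis by simp
  next
    case False2: False
    hence yz: "y < z" using assms by simp
    have na: "\<And>x. y \<le> x \<Longrightarrow> x \<le> z \<Longrightarrow> x \<noteq> a" using False by auto
    define g where "g = (\<lambda>x. (ln x - ln a) / (x - a))"
    have der: "\<And>x. y \<le> x \<Longrightarrow> x \<le> z \<Longrightarrow> DERIV g x :> (((x - a) / x - (ln x - ln a)) / (x - a)^2)"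
    proof -
      fix x assume x: "y \<le> x" "x \<le> z"
      have xa: "x \<noteq> a" using na x by auto
      have x0: "x > 0" using x assms by simp
      show "DERIV g x :> (((x - a) / x - (ln x - ln a)) / (x - a)^2)"
        unfolding g_def using xa x0
        by (auto intro!: derivative_eq_intros simp: field_simps power2_eq_square)
    qed
    from MVT2[OF yz der] obtain w where w: "y < w" "w < z"
      "g z - g y = (z - y) * (((w - a) / w - (ln w - ln a)) / (w - a)^2)" by blast
    have "\<bar>((w - a) / w - (ln w - ln a)) / (w - a)^2\<bar> \<le> 1 / (a * w)"
      by (rule Dl_deriv_bound) (use w na assms in auto)
    also have "\<dots> \<le> 1 / al^2" by (rule sq_bound) (use w assms in auto)
    finally have b: "\<bar>((w - a) / w - (ln w - ln a)) / (w - a)^2\<bar> \<le> 1 / al^2" .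
    have gy: "Dl a y = g y" using na[of y] assms by (simp add: Dl_def g_def)
    have gz: "Dl a z = g z" using na[of z] yz by (simp add: Dl_def g_def)
    have "\<bar>Dl a y - Dl a z\<bar> = \<bar>g z - g y\<bar>" using gy gz by (simp add: abs_minus_commute)
    also have "\<dots> = \<bar>z - y\<bar> * \<bar>((w - a) / w - (ln w - ln a)) / (w - a)^2\<bar>"
      by (simp only: w(3) abs_mult)
    also have "\<bar>z - y\<bar> = z - y" using yz by simp
    finally have "\<bar>Dl a y - Dl a z\<bar> = (z - y) * \<bar>((w - a) / w - (ln w - ln a)) / (w - a)^2\<bar>" .
    also have "\<dots> \<le> (z - y) * (1 / al^2)" by (rule mult_left_mono[OF b]) (use yz in simp)
    finally show ?thesis by simp
  qed
qed

lemma Dl_lip1: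
  assumes "0 < al" "al \<le> a" "al \<le> y" "al \<le> z"
  shows "\<bar>Dl a y - Dl a z\<bar> \<le> \<bar>y - z\<bar> / al^2"
proof (cases "y \<le> z")
  case True thus ?thesis using Dl_lip1_ord[of al a y z] assms by simp
next
  case False thus ?thesis using Dl_lip1_ord[of al a z y] assms by (simp add: abs_minus_commute)
qed

lemma mf_lip:
  assumes "0 < al" "al \<le> a" "a \<le> b" "al \<le> a'" "a' \<le> b'"
  shows "\<bar>mf a b - mf a' b'\<bar> \<le> (\<bar>a - a'\<bar> + \<bar>b - b'\<bar>) / al^2"
proof -
  have "mf a b - mf a' b' = (Dl a b - Dl a b') + (Dl b' a - Dl b' a')"
    using assms by (simp add: mf_Dl Dl_sym[of a b'] Dl_sym[of a' b'])
  moreover have "\<bar>Dl a b - Dl a b'\<bar> \<le> \<bar>b - b'\<bar> / al^2" by (rule Dl_lip1) (use assms in auto)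
  moreover have "\<bar>Dl b' a - Dl b' a'\<bar> \<le> \<bar>a - a'\<bar> / al^2" by (rule Dl_lip1) (use assms in auto)
  moreover have "\<bar>b - b'\<bar> / al^2 + \<bar>a - a'\<bar> / al^2 = (\<bar>a - a'\<bar> + \<bar>b - b'\<bar>) / al^2"
    by (simp add: add_divide_distrib)
  ultimately show ?thesis by linarith
qed



definition qf :: "real^'n^'n \<Rightarrow> real^'n \<Rightarrow> real" where "qf A x = x \<bullet> (A *v x)"

definition cn :: "'n::finite itself \<Rightarrow> real" where "cn _ = real CARD('n) * real CARD('n)"

lemma transpose_diff': "transpose (A - B) = transpose A - transpose (B :: real^'n^'n)"
  by (simp add: transpose_def vec_eq_iff)
lemma transpose_add': "transpose (A + B) = transpose A + transpose (B :: real^'n^'n)"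
  by (simp add: transpose_def vec_eq_iff)
lemma transpose_neg': "transpose (- A) = - transpose (A :: real^'n^'n)"
  by (simp add: transpose_def vec_eq_iff)

lemma mv_norm: "norm ((A::real^'n^'n) *v x) \<le> cn TYPE('n) * norm A * norm x"
proof -
  have "norm (A *v x) \<le> onorm ((*v) A) * norm x"
    by (rule onorm[OF matrix_vector_mul_bounded_linear])
  moreover have "onorm ((*v) A) \<le> real CARD('n) * real CARD('n) * norm A"
  proof (rule onorm_le_matrix_component)
    fix i j
    have "\<bar>A $ i $ j\<bar> \<le> norm (A $ i)" by (rule component_le_norm_cart)
    also have "\<dots> \<le> norm A" by (rule Finite_Cartesian_Product.norm_nth_le)
    finally show "\<bar>A $ i $ j\<bar> \<le> norm A" .
  qed
  ultimately show ?thesis unfolding cn_def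
    by (meson mult_right_mono norm_ge_zero order_trans)
qed

lemma cn_pos: "cn TYPE('n::finite) > 0" by (simp add: cn_def)

lemma qf_abs: "\<bar>qf (A::real^'n^'n) x\<bar> \<le> cn TYPE('n) * norm A * (norm x)^2"
proof -
  have "\<bar>qf A x\<bar> \<le> norm x * norm (A *v x)" unfolding qf_def by (rule Cauchy_Schwarz_ineq2)
  also have "\<dots> \<le> norm x * (cn TYPE('n) * norm A * norm x)" by (rule mult_left_mono[OF mv_norm]) simp
  finally show ?thesis by (simp add: power2_eq_square algebra_simps)
qed

lemma qf_lin: "qf (c *\<^sub>R A + d *\<^sub>R B) x = c * qf A x + d * qf B x"
  by (simp add: qf_def matrix_vector_mult_add_rdistrib scaleR_matrix_vector_assoc[symmetric] inner_add_right)

lemma qf_scale: "qf (c *\<^sub>R A) x = c * qf A x"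
  by (simp add: qf_def scaleR_matrix_vector_assoc[symmetric])

lemma qf_diff: "qf (A - B) x = qf A x - qf B x"
  by (simp add: qf_def matrix_vector_mult_diff_rdistrib inner_diff_right)

lemma qf_neg: "qf (- A) x = - qf A x"
proof -
  have "(- A) *v x = - (A *v x)" by (simp add: matrix_vector_mult_def vec_eq_iff sum_negf)
  thus ?thesis by (simp add: qf_def)
qed

lemma qf_scale_vec: "qf A (c *\<^sub>R x) = c^2 * qf A x"
  by (simp add: qf_def matrix_vector_mult_scaleR power2_eq_square)

lemma qf_zero[simp]: "qf A 0 = 0" by (simp add: qf_def)

lemma sym_dot: "transpose A = (A::real^'n^'n) \<Longrightarrow> x \<bullet> (A *v y) = y \<bullet> (A *v x)"
proof -
  assume t: "transpose A = A"
  have "x \<bullet> (A *v y) = (x v* A) \<bullet> y" by (simp add: dot_lmul_matrix)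
  also have "x v* A = A *v x" using vector_transpose_matrix[of x A] t by simp
  finally show ?thesis by (simp add: inner_commute)
qed

lemma spd_qf_pos: "spd A \<Longrightarrow> x \<noteq> 0 \<Longrightarrow> qf A x > 0"
  by (simp add: spd_def qf_def)

lemma spd_qf_nonneg: "spd A \<Longrightarrow> qf A x \<ge> 0"
  by (cases "x = 0") (auto dest: spd_qf_pos[of A x])

lemma spd_ker: "spd X \<Longrightarrow> X *v x = 0 \<Longrightarrow> x = 0"
  using spd_qf_pos[of X x] by (auto simp: qf_def)

lemma spd_inv: "spd (X::real^'n^'n) \<Longrightarrow> X ** matrix_inv X = mat 1 \<and> matrix_inv X ** X = mat 1"
proof -
  assume s: "spd X"
  have "\<exists>B. B ** X = mat 1" unfolding matrix_left_invertible_ker using spd_ker[OF s] by blast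
  hence "invertible X" using invertible_left_inverse by blast
  hence "\<exists>A'. X ** A' = mat 1 \<and> A' ** X = mat 1" by (simp add: invertible_def)
  thus ?thesis unfolding matrix_inv_def by (rule someI_ex)
qed

lemma eig_set:
  assumes "spd (X::real^'n^'n)"
  shows "eigenvalues_real (Y ** matrix_inv X) = {l. \<exists>x. x \<noteq> 0 \<and> Y *v x = l *\<^sub>R (X *v x)}"
proof -
  note inv = spd_inv[OF assms]
  show ?thesis
  proof (intro set_eqI iffI)
    fix l assume "l \<in> eigenvalues_real (Y ** matrix_inv X)"
    then obtain v where v: "v \<noteq> 0" "(Y ** matrix_inv X) *v v = l *s v"
      by (auto simp: eigenvalues_real_def)
    define x where "x = matrix_inv X *v v"
    have Xx: "X *v x = v" unfolding x_def by (simp add: matrix_vector_mul_assoc inv)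
    have "x \<noteq> 0" using Xx v by auto
    moreover have "Y *v x = l *\<^sub>R (X *v x)"
      using v(2) Xx by (simp add: x_def matrix_vector_mul_assoc scalar_mult_eq_scaleR)
    ultimately show "l \<in> {l. \<exists>x. x \<noteq> 0 \<and> Y *v x = l *\<^sub>R (X *v x)}" by blast
  next
    fix l assume "l \<in> {l. \<exists>x. x \<noteq> 0 \<and> Y *v x = l *\<^sub>R (X *v x)}"
    then obtain x where x: "x \<noteq> 0" "Y *v x = l *\<^sub>R (X *v x)" by blast
    have "X *v x \<noteq> 0" using spd_ker[OF assms] x by auto
    moreover have "(Y ** matrix_inv X) *v (X *v x) = l *s (X *v x)"
    proof -
      have "(Y ** matrix_inv X) *v (X *v x) = ((Y ** matrix_inv X) ** X) *v x" by (simp add: matrix_vector_mul_assoc)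
      also have "(Y ** matrix_inv X) ** X = Y ** (matrix_inv X ** X)" by (simp add: matrix_mul_assoc)
      also have "matrix_inv X ** X = mat 1" using inv by simp
      finally show ?thesis using x by (simp add: scalar_mult_eq_scaleR)
    qed
    ultimately show "l \<in> eigenvalues_real (Y ** matrix_inv X)"
      unfolding eigenvalues_real_def by blast
  qed
qed

lemma Xorth:
  assumes "transpose X = (X::real^'n^'n)" "transpose Y = Y"
    "Y *v x = l *\<^sub>R (X *v x)" "Y *v y = m *\<^sub>R (X *v y)" "l \<noteq> m"
  shows "x \<bullet> (X *v y) = 0"
proof -
  have "x \<bullet> (Y *v y) = m * (x \<bullet> (X *v y))" using assms(4) by simp
  moreover have "x \<bullet> (Y *v y) = y \<bullet> (Y *v x)" by (rule sym_dot[OF assms(2)])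
  moreover have "y \<bullet> (Y *v x) = l * (y \<bullet> (X *v x))" using assms(3) by simp
  moreover have "y \<bullet> (X *v x) = x \<bullet> (X *v y)" by (rule sym_dot[OF assms(1)])
  ultimately have "(l - m) * (x \<bullet> (X *v y)) = 0" by (simp add: algebra_simps)
  thus ?thesis using assms(5) by simp
qed

lemma eig_finite:
  assumes "spd (X::real^'n^'n)" "transpose Y = Y"
  shows "finite {l. \<exists>x. x \<noteq> 0 \<and> Y *v x = l *\<^sub>R (X *v x)}" (is "finite ?E")
proof -
  define f where "f l = (SOME x. x \<noteq> 0 \<and> Y *v x = l *\<^sub>R (X *v x))" for l
  have fE: "f l \<noteq> 0 \<and> Y *v f l = l *\<^sub>R (X *v f l)" if "l \<in> ?E" for l
  proof -
    have "\<exists>x. x \<noteq> 0 \<and> Y *v x = l *\<^sub>R (X *v x)" using that by blast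
    from someI_ex[OF this] show ?thesis unfolding f_def .
  qed
  have tX: "transpose X = X" using assms(1) by (simp add: spd_def)
  have inj: "inj_on f ?E"
  proof (rule inj_onI)
    fix l m assume lm: "l \<in> ?E" "m \<in> ?E" "f l = f m"
    define v where "v = X *v f l"
    have A: "l *\<^sub>R v = m *\<^sub>R v" using fE[OF lm(1)] fE[OF lm(2)] lm(3) unfolding v_def by metis
    have B: "v \<noteq> 0" using spd_ker[OF assms(1)] fE[OF lm(1)] unfolding v_def by auto
    show "l = m" using A B by (simp add: scaleR_cancel_right)
  qed
  have "independent (f ` ?E)"
  proof
    assume "dependent (f ` ?E)"
    then obtain a where a: "a \<in> f ` ?E" "a \<in> span (f ` ?E - {a})"
      unfolding dependent_def by blast
    then obtain l where l: "l \<in> ?E" "a = f l" by blast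
    have sub: "subspace {w. a \<bullet> (X *v w) = 0}"
      by (auto simp: subspace_def matrix_vector_right_distrib inner_add_right matrix_vector_mult_scaleR)
    have "f ` ?E - {a} \<subseteq> {w. a \<bullet> (X *v w) = 0}"
    proof
      fix w assume w: "w \<in> f ` ?E - {a}"
      then obtain m where m: "m \<in> ?E" "w = f m" by blast
      have "l \<noteq> m" using w m l by auto
      thus "w \<in> {w. a \<bullet> (X *v w) = 0}"
        using Xorth[OF tX assms(2), of a l w m] fE[OF l(1)] fE[OF m(1)] l m by simp
    qed
    hence "a \<in> {w. a \<bullet> (X *v w) = 0}"
      using span_minimal[OF _ sub] a(2) by blast
    hence "qf X a = 0" by (simp add: qf_def)
    moreover have "a \<noteq> 0" using fE[OF l(1)] l by simp
    ultimately show False using spd_qf_pos[OF assms(1)] by fastforce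
  qed
  hence "finite (f ` ?E)" using independent_bound by blast
  thus ?thesis using finite_imageD[OF _ inj] by blast
qed

lemma psd_kernel:
  assumes t: "transpose A = (A::real^'n^'n)" and psd: "\<And>x. 0 \<le> qf A x" and z: "qf A x0 = 0"
  shows "A *v x0 = 0"
proof (rule ccontr)
  define w where "w = A *v x0"
  assume "A *v x0 \<noteq> 0"
  hence W: "w \<bullet> w > 0" by (simp add: w_def)
  define q where "q = qf A w"
  define s where "s = (w \<bullet> w) / (\<bar>q\<bar> + 1)"
  have s0: "s > 0" using W by (simp add: s_def)
  have sq: "s * (\<bar>q\<bar> + 1) = w \<bullet> w" unfolding s_def by simp
  have e1: "x0 \<bullet> (A *v w) = w \<bullet> w" using sym_dot[OF t, of x0 w] by (simp add: w_def)
  have "qf A (x0 - s *\<^sub>R w) = qf A x0 - s * (x0 \<bullet> (A *v w)) - s * (w \<bullet> (A *v x0)) + s * s * q"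
    by (simp add: qf_def q_def matrix_vector_mult_diff_distrib matrix_vector_mult_scaleR
        inner_diff_left inner_diff_right algebra_simps)
  also have "\<dots> = s * (s * q) - 2 * (s * (w \<bullet> w))" using z e1 by (simp add: w_def algebra_simps)
  finally have eq: "qf A (x0 - s *\<^sub>R w) = s * (s * q) - 2 * (s * (w \<bullet> w))" .
  have "s * q \<le> s * \<bar>q\<bar>" using s0 by (simp add: mult_left_mono)
  also have "\<dots> < s * (\<bar>q\<bar> + 1)" using s0 by simp
  finally have "s * q < w \<bullet> w" using sq by simp
  hence "s * (s * q) < s * (w \<bullet> w)" using s0 by simp
  moreover have "s * (w \<bullet> w) > 0" using s0 W by simp
  ultimately have "qf A (x0 - s *\<^sub>R w) < 0" using eq by linarith
  thus False using psd[of "x0 - s *\<^sub>R w"] by simp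
qed

lemma min_eig_exists:
  assumes X: "spd (X::real^'n^'n)" and tY: "transpose Y = Y"
  shows "\<exists>x0 l0. x0 \<noteq> 0 \<and> Y *v x0 = l0 *\<^sub>R (X *v x0) \<and> (\<forall>x. l0 * qf X x \<le> qf Y x)"
proof -
  define S where "S = sphere (0::real^'n) 1"
  define r where "r x = qf Y x / qf X x" for x
  have S0: "\<And>x. x \<in> S \<Longrightarrow> x \<noteq> 0" by (auto simp: S_def)
  have cq: "continuous_on UNIV (\<lambda>x. qf A x)" for A :: "real^'n^'n"
    unfolding qf_def
    by (intro continuous_on_inner continuous_on_id linear_continuous_on matrix_vector_mul_bounded_linear)
  have nz: "\<forall>x\<in>S. qf X x \<noteq> 0" using spd_qf_pos[OF X] S0 by (metis less_irrefl)
  have cr: "continuous_on S r" unfolding r_def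
    by (intro continuous_on_divide continuous_on_subset[OF cq] nz) auto
  have "S \<noteq> {}" unfolding S_def using vector_choose_size[of 1] by auto
  from continuous_attains_inf[OF _ this cr] obtain x0 where x0: "x0 \<in> S" "\<And>y. y \<in> S \<Longrightarrow> r x0 \<le> r y"
    unfolding S_def by auto
  define l0 where "l0 = r x0"
  have qX0: "qf X x0 > 0" using spd_qf_pos[OF X S0[OF x0(1)]] .
  have all: "l0 * qf X x \<le> qf Y x" for x
  proof (cases "x = 0")
    case True thus ?thesis by simp
  next
    case False
    define u where "u = (1 / norm x) *\<^sub>R x"
    have uS: "u \<in> S" using False by (simp add: u_def S_def)
    have xu: "x = norm x *\<^sub>R u" using False by (simp add: u_def)
    have qu: "qf X u > 0" using spd_qf_pos[OF X S0[OF uS]] .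
    have "l0 \<le> qf Y u / qf X u" using x0(2)[OF uS] by (simp add: l0_def r_def)
    hence "l0 * qf X u \<le> qf Y u" using qu by (simp add: le_divide_eq)
    hence "(norm x)^2 * (l0 * qf X u) \<le> (norm x)^2 * qf Y u" by (intro mult_left_mono) auto
    thus ?thesis by (subst (1 2) xu) (simp add: qf_scale_vec algebra_simps)
  qed
  define A where "A = Y - l0 *\<^sub>R X"
  have tA: "transpose A = A" using X tY by (simp add: A_def transpose_diff' transpose_scalar spd_def)
  have psd: "0 \<le> qf A x" for x using all[of x] by (simp add: A_def qf_diff qf_scale)
  have z1: "qf A x0 = qf Y x0 - r x0 * qf X x0" by (simp add: A_def qf_diff qf_scale l0_def)
  have z2: "r x0 * qf X x0 = qf Y x0" using qX0 by (simp add: r_def)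
  have z: "qf A x0 = 0" using z1 z2 by simp
  have "A *v x0 = 0" by (rule psd_kernel[OF tA psd z])
  hence "Y *v x0 = l0 *\<^sub>R (X *v x0)"
    by (simp add: A_def matrix_vector_mult_diff_rdistrib scaleR_matrix_vector_assoc[symmetric])
  thus ?thesis using S0[OF x0(1)] all by blast
qed

lemma lam_props:
  assumes X: "spd (X::real^'n^'n)" and tY: "transpose Y = Y"
  shows "(\<forall>x. lambda_min (Y ** matrix_inv X) * qf X x \<le> qf Y x)
    \<and> (\<exists>x. x \<noteq> 0 \<and> qf Y x = lambda_min (Y ** matrix_inv X) * qf X x)
    \<and> (\<forall>x. qf Y x \<le> lambda_max (Y ** matrix_inv X) * qf X x)
    \<and> (\<exists>x. x \<noteq> 0 \<and> qf Y x = lambda_max (Y ** matrix_inv X) * qf X x)"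
proof -
  define E where "E = {l. \<exists>x. x \<noteq> 0 \<and> Y *v x = l *\<^sub>R (X *v x)}"
  have EE: "eigenvalues_real (Y ** matrix_inv X) = E" unfolding E_def by (rule eig_set[OF X])
  have fin: "finite E" unfolding E_def by (rule eig_finite[OF X tY])
  have Eq: "qf Y x = l * qf X x" if "Y *v x = l *\<^sub>R (X *v x)" for x l
    using that by (simp add: qf_def)
  obtain x0 l0 where m: "x0 \<noteq> 0" "Y *v x0 = l0 *\<^sub>R (X *v x0)" "\<And>x. l0 * qf X x \<le> qf Y x"
    using min_eig_exists[OF X tY] by blast
  have "Min E = l0"
  proof (rule Min_eqI[OF fin])
    fix l assume "l \<in> E"
    then obtain x where x: "x \<noteq> 0" "Y *v x = l *\<^sub>R (X *v x)" by (auto simp: E_def)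
    have "l0 * qf X x \<le> l * qf X x" using m(3)[of x] Eq[OF x(2)] by simp
    thus "l0 \<le> l" using spd_qf_pos[OF X x(1)] by simp
  qed (use m in \<open>auto simp: E_def\<close>)
  hence lmin: "lambda_min (Y ** matrix_inv X) = l0" by (simp add: lambda_min_def EE)
  have tY': "transpose (- Y) = - Y" using tY by (simp add: transpose_neg')
  obtain x1 l1 where M: "x1 \<noteq> 0" "(- Y) *v x1 = l1 *\<^sub>R (X *v x1)" "\<And>x. l1 * qf X x \<le> qf (- Y) x"
    using min_eig_exists[OF X tY'] by blast
  have negv: "(- Y) *v x = - (Y *v x)" for x by (simp add: matrix_vector_mult_def vec_eq_iff sum_negf)
  have "Y *v x1 = - ((- Y) *v x1)" using negv[of x1] by simp
  also have "\<dots> = (- l1) *\<^sub>R (X *v x1)" using M(2) by simp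
  finally have M2: "Y *v x1 = (- l1) *\<^sub>R (X *v x1)" .
  have M3: "qf Y x \<le> (- l1) * qf X x" for x using M(3)[of x] by (simp add: qf_neg)
  have "Max E = - l1"
  proof (rule Max_eqI[OF fin])
    fix l assume "l \<in> E"
    then obtain x where x: "x \<noteq> 0" "Y *v x = l *\<^sub>R (X *v x)" by (auto simp: E_def)
    have "l * qf X x \<le> (- l1) * qf X x" using M3[of x] unfolding Eq[OF x(2)] .
    thus "l \<le> - l1" by (rule mult_right_le_imp_le) (rule spd_qf_pos[OF X x(1)])
  qed (use M2 M(1) in \<open>auto simp: E_def\<close>)
  hence lmax: "lambda_max (Y ** matrix_inv X) = - l1" by (simp add: lambda_max_def EE)
  show ?thesis unfolding lmin lmax using m M M2 M3 Eq by blast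
qed



definition reg :: "real \<Rightarrow> real \<Rightarrow> real^'n^'n \<Rightarrow> bool" where
  "reg c M X \<longleftrightarrow> spd X \<and> (\<forall>x. c * (norm x)^2 \<le> qf X x) \<and> norm X \<le> M"

definition lmin :: "real^'n^'n \<Rightarrow> real^'n^'n \<Rightarrow> real" where
  "lmin Y X = lambda_min (Y ** matrix_inv X)"
definition lmax :: "real^'n^'n \<Rightarrow> real^'n^'n \<Rightarrow> real" where
  "lmax Y X = lambda_max (Y ** matrix_inv X)"

definition GG :: "real^'n^'n \<Rightarrow> real^'n^'n \<Rightarrow> real^'n^'n" where
  "GG Y X = mf (lmin Y X) (lmax Y X) *\<^sub>R Y + ofn (lmin Y X) (lmax Y X) *\<^sub>R X"

definition alo :: "'n::finite itself \<Rightarrow> real \<Rightarrow> real \<Rightarrow> real" where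
  "alo T cY M = min 1 (cY / (cn T * M))"
definition bhi :: "'n::finite itself \<Rightarrow> real \<Rightarrow> real \<Rightarrow> real" where
  "bhi T MY c = max 1 (cn T * MY / c)"

lemma gen_bound:
  fixes d lam q q' c nn K D A0 :: real
  assumes "0 < c" "0 < nn" "c * nn \<le> q'" "d * q' \<le> lam * \<bar>q - q'\<bar>" "\<bar>q - q'\<bar> \<le> K * nn * D"
    "0 \<le> lam" "lam \<le> A0" "0 \<le> K" "0 \<le> D"
  shows "d \<le> A0 * K * D / c"
proof -
  have A0: "0 \<le> A0" using assms by linarith
  have r0: "0 \<le> A0 * K * D / c" using assms A0 by simp
  show ?thesis
  proof (cases "d \<le> 0")
    case True thus ?thesis using r0 by linarith
  next
    case False
    have "d * (c * nn) \<le> d * q'" using False assms by (intro mult_left_mono) auto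
    also have "\<dots> \<le> lam * \<bar>q - q'\<bar>" by fact
    also have "\<dots> \<le> A0 * (K * nn * D)" using assms by (intro mult_mono) auto
    finally have "d * c * nn \<le> A0 * K * D * nn" by (simp add: algebra_simps)
    hence "d * c \<le> A0 * K * D" using assms by simp
    thus ?thesis using assms by (simp add: le_divide_eq)
  qed
qed

lemma reg_qf_upper: "reg c M X \<Longrightarrow> qf X x \<le> cn TYPE('n) * M * (norm x)^2" for X :: "real^'n^'n"
proof -
  assume r: "reg c M X"
  have "qf X x \<le> cn TYPE('n) * norm X * (norm x)^2" using qf_abs[of X x] by linarith
  also have "\<dots> \<le> cn TYPE('n) * M * (norm x)^2"
    using r cn_pos[where 'n='n] by (intro mult_right_mono mult_left_mono) (auto simp: reg_def)
  finally show ?thesis .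
qed

lemma ab_facts:
  fixes X Y :: "real^'n^'n"
  assumes r: "reg c M X" and Y: "spd Y" and cY: "\<forall>x. cY * (norm x)^2 \<le> qf Y x"
    and pos: "0 < c" "0 < M" "0 < cY"
  shows "alo TYPE('n) cY M \<le> lmin Y X \<and> lmin Y X \<le> lmax Y X \<and> lmax Y X \<le> bhi TYPE('n) (norm Y) c
    \<and> lmax Y X \<le> cn TYPE('n) * norm Y / c"
proof -
  have X: "spd X" using r by (simp add: reg_def)
  have tY: "transpose Y = Y" using Y by (simp add: spd_def)
  note L = lam_props[OF X tY]
  define a where "a = lmin Y X"
  define b where "b = lmax Y X"
  obtain x where x: "x \<noteq> 0" "qf Y x = a * qf X x" using L unfolding a_def lmin_def by blast
  obtain z where z: "z \<noteq> 0" "qf Y z = b * qf X z" using L unfolding b_def lmax_def by blast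
  have L3: "\<forall>x. qf Y x \<le> b * qf X x" using L unfolding b_def lmax_def by blast
  have ab: "a * qf X x \<le> b * qf X x" using L3 x(2) by (metis order_refl)
  have qx: "qf X x > 0" using spd_qf_pos[OF X x(1)] .
  have qz: "qf X z > 0" using spd_qf_pos[OF X z(1)] .
  have nx: "(norm x)^2 > 0" using x by simp
  have nz: "(norm z)^2 > 0" using z by simp
  have cnp: "cn TYPE('n) > 0" by (rule cn_pos)
  have "cY * (norm x)^2 \<le> a * qf X x" using cY x(2) by (metis order_refl)
  also have "a * qf X x \<le> a * (cn TYPE('n) * M * (norm x)^2)"
  proof -
    have "a * qf X x > 0" using x(2) spd_qf_pos[OF Y x(1)] by simp
    hence "a > 0" using qx by (simp add: zero_less_mult_iff)
    thus ?thesis using reg_qf_upper[OF r, of x] by (intro mult_left_mono) auto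
  qed
  finally have "cY * (norm x)^2 \<le> (a * (cn TYPE('n) * M)) * (norm x)^2" by (simp add: algebra_simps)
  hence "cY \<le> a * (cn TYPE('n) * M)" using nx by simp
  hence alo: "cY / (cn TYPE('n) * M) \<le> a" using cnp pos by (simp add: divide_le_eq)
  have "b * qf X z > 0" using z(2) spd_qf_pos[OF Y z(1)] by simp
  hence b0: "b > 0" using qz by (simp add: zero_less_mult_iff)
  have "b * (c * (norm z)^2) \<le> b * qf X z" using r b0 by (intro mult_left_mono) (auto simp: reg_def)
  also have "\<dots> = qf Y z" using z by simp
  also have "\<dots> \<le> cn TYPE('n) * norm Y * (norm z)^2" using qf_abs[of Y z] by linarith
  finally have "(b * c) * (norm z)^2 \<le> (cn TYPE('n) * norm Y) * (norm z)^2" by (simp add: algebra_simps)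
  hence "b * c \<le> cn TYPE('n) * norm Y" using nz by simp
  hence bhi: "b \<le> cn TYPE('n) * norm Y / c" using pos by (simp add: le_divide_eq)
  have "a \<le> b" using ab qx by simp
  thus ?thesis using alo bhi unfolding alo_def bhi_def a_def b_def by auto
qed

lemma qf_diff_bound: "\<bar>qf X x - qf X' x\<bar> \<le> cn TYPE('n) * (norm x)^2 * norm (X - X')"
  for X X' :: "real^'n^'n"
  using qf_abs[of "X - X'" x] by (simp add: qf_diff algebra_simps)

lemma lmin_onesided:
  fixes X X' Y :: "real^'n^'n"
  assumes r: "reg c M X" "reg c M X'" and Y: "spd Y" and cY: "\<forall>x. cY * (norm x)^2 \<le> qf Y x"
    and pos: "0 < c" "0 < M" "0 < cY"
  shows "lmin Y X' - lmin Y X \<le> (cn TYPE('n) * norm Y / c) * cn TYPE('n) * norm (X - X') / c"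
proof -
  have X: "spd X" "spd X'" using r by (auto simp: reg_def)
  have tY: "transpose Y = Y" using Y by (simp add: spd_def)
  note L = lam_props[OF X(1) tY]
  note L' = lam_props[OF X(2) tY]
  obtain x where x: "x \<noteq> 0" "qf Y x = lmin Y X * qf X x" using L unfolding lmin_def by blast
  have a': "lmin Y X' * qf X' x \<le> qf Y x" using L' unfolding lmin_def by blast
  note F = ab_facts[OF r(1) Y cY pos]
  have a0: "0 \<le> lmin Y X" using F unfolding alo_def by (smt (verit) divide_pos_pos mult_pos_pos cn_pos pos)
  show ?thesis
  proof (rule gen_bound[where q = "qf X x" and q' = "qf X' x" and nn = "(norm x)^2" and lam = "lmin Y X"])
    show "0 < c" by fact
    show "0 < (norm x)^2" using x by simp
    show "c * (norm x)^2 \<le> qf X' x" using r(2) by (simp add: reg_def)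
    have "(lmin Y X' - lmin Y X) * qf X' x \<le> lmin Y X * qf X x - lmin Y X * qf X' x"
      using a' x(2) by (simp add: algebra_simps)
    also have "\<dots> = lmin Y X * (qf X x - qf X' x)" by (simp add: algebra_simps)
    also have "\<dots> \<le> lmin Y X * \<bar>qf X x - qf X' x\<bar>" using a0 by (intro mult_left_mono) auto
    finally show "(lmin Y X' - lmin Y X) * qf X' x \<le> lmin Y X * \<bar>qf X x - qf X' x\<bar>" .
    show "\<bar>qf X x - qf X' x\<bar> \<le> cn TYPE('n) * (norm x)^2 * norm (X - X')" by (rule qf_diff_bound)
    show "0 \<le> lmin Y X" by fact
    show "lmin Y X \<le> cn TYPE('n) * norm Y / c" using F by linarith
    show "0 \<le> cn TYPE('n)" using cn_pos[where 'n='n] by simp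
    show "0 \<le> norm (X - X')" by simp
  qed
qed

lemma lmax_onesided:
  fixes X X' Y :: "real^'n^'n"
  assumes r: "reg c M X" "reg c M X'" and Y: "spd Y" and cY: "\<forall>x. cY * (norm x)^2 \<le> qf Y x"
    and pos: "0 < c" "0 < M" "0 < cY"
  shows "lmax Y X - lmax Y X' \<le> (cn TYPE('n) * norm Y / c) * cn TYPE('n) * norm (X - X') / c"
proof -
  have X: "spd X" "spd X'" using r by (auto simp: reg_def)
  have tY: "transpose Y = Y" using Y by (simp add: spd_def)
  note L = lam_props[OF X(1) tY]
  note L' = lam_props[OF X(2) tY]
  obtain x where x: "x \<noteq> 0" "qf Y x = lmax Y X * qf X x" using L unfolding lmax_def by blast
  have b': "qf Y x \<le> lmax Y X' * qf X' x" using L' unfolding lmax_def by blast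
  note F = ab_facts[OF r(1) Y cY pos]
  have a0: "0 \<le> lmin Y X" using F unfolding alo_def by (smt (verit) divide_pos_pos mult_pos_pos cn_pos pos)
  have b0: "0 \<le> lmax Y X" using a0 F by linarith
  show ?thesis
  proof (rule gen_bound[where q = "qf X x" and q' = "qf X' x" and nn = "(norm x)^2" and lam = "lmax Y X"])
    show "0 < c" by fact
    show "0 < (norm x)^2" using x by simp
    show "c * (norm x)^2 \<le> qf X' x" using r(2) by (simp add: reg_def)
    have "(lmax Y X - lmax Y X') * qf X' x \<le> lmax Y X * qf X' x - lmax Y X * qf X x"
      using b' x(2) by (simp add: algebra_simps)
    also have "\<dots> = lmax Y X * (qf X' x - qf X x)" by (simp add: algebra_simps)
    also have "\<dots> \<le> lmax Y X * \<bar>qf X x - qf X' x\<bar>" using b0 by (intro mult_left_mono) auto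
    finally show "(lmax Y X - lmax Y X') * qf X' x \<le> lmax Y X * \<bar>qf X x - qf X' x\<bar>" .
    show "\<bar>qf X x - qf X' x\<bar> \<le> cn TYPE('n) * (norm x)^2 * norm (X - X')" by (rule qf_diff_bound)
    show "0 \<le> lmax Y X" by fact
    show "lmax Y X \<le> cn TYPE('n) * norm Y / c" using F by linarith
    show "0 \<le> cn TYPE('n)" using cn_pos[where 'n='n] by simp
    show "0 \<le> norm (X - X')" by simp
  qed
qed

lemma lab_lip:
  fixes X X' Y :: "real^'n^'n"
  assumes r: "reg c M X" "reg c M X'" and Y: "spd Y" and cY: "\<forall>x. cY * (norm x)^2 \<le> qf Y x"
    and pos: "0 < c" "0 < M" "0 < cY"
  shows "\<bar>lmin Y X - lmin Y X'\<bar> \<le> (cn TYPE('n) * norm Y / c) * cn TYPE('n) * norm (X - X') / c"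
    "\<bar>lmax Y X - lmax Y X'\<bar> \<le> (cn TYPE('n) * norm Y / c) * cn TYPE('n) * norm (X - X') / c"
  using lmin_onesided[OF r Y cY pos] lmin_onesided[OF r(2,1) Y cY pos]
    lmax_onesided[OF r Y cY pos] lmax_onesided[OF r(2,1) Y cY pos]
  by (auto simp: norm_minus_commute)



lemma ln_lip: "0 < (al::real) \<Longrightarrow> al \<le> a \<Longrightarrow> al \<le> a' \<Longrightarrow> \<bar>ln a - ln a'\<bar> \<le> \<bar>a - a'\<bar> / al"
proof -
  assume h: "0 < al" "al \<le> a" "al \<le> a'"
  have one: "ln x - ln y \<le> \<bar>x - y\<bar> / al" if "al \<le> x" "al \<le> y" for x y
  proof -
    have "ln (x / y) \<le> x / y - 1" by (rule ln_le_minus_one) (use that h in auto)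
    hence "ln x - ln y \<le> (x - y) / y" using that h by (simp add: ln_div diff_divide_distrib)
    also have "\<dots> \<le> \<bar>x - y\<bar> / y" by (rule divide_right_mono) (use that h in auto)
    also have "\<dots> \<le> \<bar>x - y\<bar> / al" by (rule divide_left_mono) (use that h in auto)
    finally show ?thesis .
  qed
  show ?thesis using one[of a a'] one[of a' a] h by (auto simp: abs_minus_commute)
qed

lemma ofn_bound:
  assumes "0 < al" "al \<le> 1" "1 \<le> be" "al \<le> a" "a \<le> b" "b \<le> be"
  shows "\<bar>ofn a b\<bar> \<le> \<bar>ln al\<bar> + \<bar>ln be\<bar> + be / al"
proof -
  have e: "ofn a b = ln a - a * mf a b" using assms by (simp add: ofn_eq)
  have l: "\<bar>ln a\<bar> \<le> \<bar>ln al\<bar> + \<bar>ln be\<bar>"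
  proof -
    have "ln al \<le> ln a" "ln a \<le> ln be" using assms by auto
    thus ?thesis by linarith
  qed
  have m: "0 \<le> mf a b" "mf a b \<le> 1 / al" using mf_bounds[of al a b] assms by auto
  have "a * mf a b \<le> be * (1 / al)" by (rule mult_mono) (use assms m in auto)
  moreover have "0 \<le> a * mf a b" using assms m by simp
  ultimately show ?thesis using e l by simp
qed

lemma ofn_lip:
  assumes "0 < al" "al \<le> a" "a \<le> b" "b \<le> be" "al \<le> a'" "a' \<le> b'" "b' \<le> be"
  shows "\<bar>ofn a b - ofn a' b'\<bar> \<le> (2 / al + be / al^2) * (\<bar>a - a'\<bar> + \<bar>b - b'\<bar>)"
proof -
  have e: "ofn a b - ofn a' b' = (ln a - ln a') - ((a - a') * mf a b + a' * (mf a b - mf a' b'))"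
    using assms by (simp add: ofn_eq algebra_simps)
  have h1: "\<bar>ln a - ln a'\<bar> \<le> \<bar>a - a'\<bar> / al" by (rule ln_lip) (use assms in auto)
  have m: "0 \<le> mf a b" "mf a b \<le> 1 / al" using mf_bounds[of al a b] assms by auto
  have h2: "\<bar>(a - a') * mf a b\<bar> \<le> \<bar>a - a'\<bar> * (1 / al)"
    unfolding abs_mult by (rule mult_left_mono) (use m in auto)
  have ml: "\<bar>mf a b - mf a' b'\<bar> \<le> (\<bar>a - a'\<bar> + \<bar>b - b'\<bar>) / al^2"
    by (rule mf_lip) (use assms in auto)
  have h3: "\<bar>a' * (mf a b - mf a' b')\<bar> \<le> be * ((\<bar>a - a'\<bar> + \<bar>b - b'\<bar>) / al^2)"
    unfolding abs_mult by (rule mult_mono) (use assms ml in auto)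
  have "\<bar>ofn a b - ofn a' b'\<bar> \<le> \<bar>a - a'\<bar> / al + \<bar>a - a'\<bar> * (1 / al) + be * ((\<bar>a - a'\<bar> + \<bar>b - b'\<bar>) / al^2)"
    unfolding e using h1 h2 h3 by (smt (verit) abs_triangle_ineq)
  also have "\<dots> \<le> (2 / al + be / al^2) * (\<bar>a - a'\<bar> + \<bar>b - b'\<bar>)"
  proof -
    have "\<bar>a - a'\<bar> / al + \<bar>a - a'\<bar> * (1 / al) = (2 / al) * \<bar>a - a'\<bar>" by simp
    also have "\<dots> \<le> (2 / al) * (\<bar>a - a'\<bar> + \<bar>b - b'\<bar>)" using assms by (intro mult_left_mono) auto
    finally have "\<bar>a - a'\<bar> / al + \<bar>a - a'\<bar> * (1 / al) \<le> (2 / al) * (\<bar>a - a'\<bar> + \<bar>b - b'\<bar>)" .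
    moreover have "be * ((\<bar>a - a'\<bar> + \<bar>b - b'\<bar>) / al^2) = (be / al^2) * (\<bar>a - a'\<bar> + \<bar>b - b'\<bar>)" by simp
    ultimately show ?thesis by (simp add: distrib_right)
  qed
  finally show ?thesis .
qed

lemma powr_ge_al: "0 < al \<Longrightarrow> al \<le> 1 \<Longrightarrow> al \<le> a \<Longrightarrow> 0 \<le> t \<Longrightarrow> t \<le> 1 \<Longrightarrow> al \<le> a powr (t::real)"
proof -
  assume h: "0 < al" "al \<le> 1" "al \<le> a" "0 \<le> t" "t \<le> 1"
  show ?thesis
  proof (cases "a \<ge> 1")
    case True thus ?thesis using ge_one_powr_ge_zero[of a t] h by linarith
  next
    case False
    have "a powr 1 \<le> a powr t" by (rule powr_mono') (use h False in auto)
    thus ?thesis using h by simp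
  qed
qed

lemma thompson_eq: "thompson X t Y = phi_ab (lmin Y X) (lmax Y X) t *\<^sub>R Y + psi_ab (lmin Y X) (lmax Y X) t *\<^sub>R X"
  by (simp add: thompson_def lmin_def lmax_def Let_def)

lemma norm_comb: "norm (p *\<^sub>R Y + q *\<^sub>R X) \<le> \<bar>p\<bar> * norm Y + \<bar>q\<bar> * norm X"
  for X Y :: "real^'n^'n"
  using norm_triangle_ineq[of "p *\<^sub>R Y" "q *\<^sub>R X"] by simp

lemma step_lemma:
  fixes Y :: "real^'n^'n"
  assumes Y: "spd Y" and cY: "\<forall>x. cY * (norm x)^2 \<le> qf Y x" and pos: "0 < c" "0 < M" "0 < cY"
  shows "\<exists>c' M' Ce Bg Lg. 0 < c' \<and> 0 < M' \<and> 0 \<le> Ce \<and> 0 \<le> Bg \<and> 0 \<le> Lg \<and>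
   (\<forall>X t. reg c M X \<longrightarrow> 0 \<le> t \<longrightarrow> t \<le> 1/2 \<longrightarrow>
       reg c' M' (thompson X t Y) \<and> norm (thompson X t Y - X - t *\<^sub>R GG Y X) \<le> Ce * t^2) \<and>
   (\<forall>X. reg c M X \<longrightarrow> norm (GG Y X) \<le> Bg) \<and>
   (\<forall>X X'. reg c M X \<longrightarrow> reg c M X' \<longrightarrow> norm (GG Y X - GG Y X') \<le> Lg * norm (X - X'))"
proof -
  define al where "al = alo TYPE('n) cY M"
  define be where "be = bhi TYPE('n) (norm Y) c"
  define MY where "MY = norm Y"
  have cnp: "cn TYPE('n) > 0" by (rule cn_pos)
  have al0: "0 < al" using pos cnp by (simp add: al_def alo_def)
  have al1: "al \<le> 1" by (simp add: al_def alo_def)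
  have be1: "1 \<le> be" by (simp add: be_def bhi_def)
  have MY0: "0 \<le> MY" by (simp add: MY_def)
  define Cc where "Cc = Cu al be"
  have Cc0: "0 \<le> Cc" using al0 be1 by (simp add: Cc_def Cu_def)
  define Ob where "Ob = \<bar>ln al\<bar> + \<bar>ln be\<bar> + be / al"
  have Ob0: "0 \<le> Ob" using al0 be1 by (simp add: Ob_def)
  define La where "La = (cn TYPE('n) * MY / c) * cn TYPE('n) / c"
  have La0: "0 \<le> La" using cnp pos MY0 by (simp add: La_def)
  have AB: "al \<le> lmin Y X \<and> lmin Y X \<le> lmax Y X \<and> lmax Y X \<le> be" if "reg c M X" for X
    using ab_facts[OF that Y cY pos] unfolding al_def be_def by blast
  define c' where "c' = c * al / 2"
  define M' where "M' = (1 / al + Cc) * MY + (1 + Ob + 2 * Cc * be) * M"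
  define Ce where "Ce = Cc * MY + 2 * Cc * be * M"
  define Bg where "Bg = (1 / al) * MY + Ob * M"
  define Lg where "Lg = (2 * La / al^2) * MY + (2 / al + be / al^2) * (2 * La) * M + Ob"
  have c'0: "0 < c'" using pos al0 by (simp add: c'_def)
  have M'0: "0 < M'"
  proof -
    have "0 \<le> (1 / al + Cc) * MY" using al0 Cc0 MY0 by simp
    moreover have "0 < (1 + Ob + 2 * Cc * be) * M"
    proof -
      have "0 \<le> 2 * Cc * be" using Cc0 be1 by simp
      hence "0 < 1 + Ob + 2 * Cc * be" using Ob0 by linarith
      thus ?thesis using pos by simp
    qed
    ultimately show ?thesis unfolding M'_def by linarith
  qed
  have Ce0: "0 \<le> Ce" unfolding Ce_def using Cc0 MY0 be1 pos by simp
  have Bg0: "0 \<le> Bg" unfolding Bg_def using al0 MY0 Ob0 pos by simp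
  have Lg0: "0 \<le> Lg" unfolding Lg_def using al0 MY0 Ob0 pos La0 be1 by simp
  have P1: "reg c' M' (thompson X t Y) \<and> norm (thompson X t Y - X - t *\<^sub>R GG Y X) \<le> Ce * t^2"
    if r: "reg c M X" and t: "0 \<le> t" "t \<le> 1/2" for X t
  proof -
    define a where "a = lmin Y X"
    define b where "b = lmax Y X"
    have ab: "al \<le> a" "a \<le> b" "b \<le> be" using AB[OF r] by (auto simp: a_def b_def)
    define ph where "ph = phi_ab a b t"
    define ps where "ps = psi_ab a b t"
    have Seq: "thompson X t Y = ph *\<^sub>R Y + ps *\<^sub>R X" by (simp add: thompson_eq ph_def ps_def a_def b_def)
    have Geq: "GG Y X = mf a b *\<^sub>R Y + ofn a b *\<^sub>R X" by (simp add: GG_def a_def b_def)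
    have pe: "\<bar>ph - t * mf a b\<bar> \<le> Cc * t^2" unfolding ph_def Cc_def
      by (rule phi_exp) (use al0 ab t in auto)
    have qe: "\<bar>ps - 1 - t * ofn a b\<bar> \<le> 2 * Cc * be * t^2" unfolding ps_def Cc_def
      by (rule psi_exp) (use al0 al1 be1 ab t in auto)
    have mfb: "0 \<le> mf a b" "mf a b \<le> 1 / al" using mf_bounds[of al a b] al0 ab by auto
    have ofb: "\<bar>ofn a b\<bar> \<le> Ob" unfolding Ob_def by (rule ofn_bound) (use al0 al1 be1 ab in auto)
    have t2: "t^2 \<le> 1" using t by (simp add: power_le_one)
    have "thompson X t Y - X - t *\<^sub>R GG Y X = (ph - t * mf a b) *\<^sub>R Y + (ps - 1 - t * ofn a b) *\<^sub>R X"
      unfolding Seq Geq by (simp add: algebra_simps)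
    hence "norm (thompson X t Y - X - t *\<^sub>R GG Y X) \<le> \<bar>ph - t * mf a b\<bar> * MY + \<bar>ps - 1 - t * ofn a b\<bar> * norm X"
      using norm_comb by (metis MY_def)
    also have "\<dots> \<le> (Cc * t^2) * MY + (2 * Cc * be * t^2) * M"
      using r pe qe MY0 by (intro add_mono mult_mono) (auto simp: reg_def)
    also have "\<dots> = Ce * t^2" by (simp add: Ce_def algebra_simps)
    finally have E: "norm (thompson X t Y - X - t *\<^sub>R GG Y X) \<le> Ce * t^2" .
    have a0: "0 < a" using al0 ab by linarith
    have php: "0 \<le> ph" "(1 - t) * a powr t \<le> ps" using phi_psi_pos[of a b t] a0 ab t by (auto simp: ph_def ps_def)
    have "al \<le> a powr t" by (rule powr_ge_al) (use al0 al1 ab t in auto)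
    hence "(1/2) * al \<le> (1 - t) * a powr t" using t al0 by (intro mult_mono) auto
    hence psl: "al / 2 \<le> ps" using php by simp
    have X: "spd X" and cX: "\<And>x. c * (norm x)^2 \<le> qf X x" and nX: "norm X \<le> M"
      using r by (auto simp: reg_def)
    have qS: "c' * (norm x)^2 \<le> qf (thompson X t Y) x" for x
    proof -
      have qY: "0 \<le> qf Y x" by (rule spd_qf_nonneg[OF Y])
      have "c' * (norm x)^2 = (al / 2) * (c * (norm x)^2)" by (simp add: c'_def)
      also have "\<dots> \<le> ps * qf X x" using psl cX[of x] al0 pos by (intro mult_mono) auto
      also have "\<dots> \<le> ph * qf Y x + ps * qf X x" using php qY by simp
      also have "\<dots> = qf (thompson X t Y) x" by (simp add: Seq qf_lin)
      finally show ?thesis .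
    qed
    have tS: "transpose (thompson X t Y) = thompson X t Y"
      using X Y by (simp add: Seq transpose_add' transpose_scalar spd_def)
    have spdS: "spd (thompson X t Y)" unfolding spd_def
    proof (intro conjI tS allI impI)
      fix x :: "real^'n" assume "x \<noteq> 0"
      hence "0 < c' * (norm x)^2" using c'0 by simp
      thus "0 < x \<bullet> (thompson X t Y *v x)" using qS[of x] by (simp add: qf_def)
    qed
    have phb: "\<bar>ph\<bar> \<le> 1 / al + Cc"
    proof -
      have "t * mf a b \<le> 1 * (1 / al)" using t mfb by (intro mult_mono) auto
      moreover have "Cc * t^2 \<le> Cc" using Cc0 t2 by (simp add: mult_left_le)
      ultimately show ?thesis using pe php mfb t by (simp add: abs_le_iff)
    qed
    have psb: "\<bar>ps\<bar> \<le> 1 + Ob + 2 * Cc * be"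
    proof -
      have "\<bar>t * ofn a b\<bar> \<le> 1 * Ob" unfolding abs_mult using t ofb by (intro mult_mono) auto
      moreover have "2 * Cc * be * t^2 \<le> 2 * Cc * be" using Cc0 be1 t2 by (simp add: mult_left_le)
      ultimately show ?thesis using qe by (simp add: abs_le_iff)
    qed
    have "norm (thompson X t Y) \<le> \<bar>ph\<bar> * MY + \<bar>ps\<bar> * norm X" unfolding Seq MY_def by (rule norm_comb)
    also have "\<dots> \<le> (1 / al + Cc) * MY + (1 + Ob + 2 * Cc * be) * M"
      using phb psb nX MY0 by (intro add_mono mult_mono) auto
    finally have nS: "norm (thompson X t Y) \<le> M'" by (simp add: M'_def)
    show ?thesis using spdS qS nS E by (simp add: reg_def)
  qed
  have P2: "norm (GG Y X) \<le> Bg" if r: "reg c M X" for X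
  proof -
    have ab: "al \<le> lmin Y X" "lmin Y X \<le> lmax Y X" "lmax Y X \<le> be" using AB[OF r] by auto
    have mfb: "0 \<le> mf (lmin Y X) (lmax Y X)" "mf (lmin Y X) (lmax Y X) \<le> 1 / al"
      using mf_bounds[of al "lmin Y X" "lmax Y X"] al0 ab by auto
    have ofb: "\<bar>ofn (lmin Y X) (lmax Y X)\<bar> \<le> Ob" unfolding Ob_def by (rule ofn_bound) (use al0 al1 be1 ab in auto)
    have "norm (GG Y X) \<le> \<bar>mf (lmin Y X) (lmax Y X)\<bar> * MY + \<bar>ofn (lmin Y X) (lmax Y X)\<bar> * norm X"
      unfolding GG_def MY_def by (rule norm_comb)
    also have "\<dots> \<le> (1 / al) * MY + Ob * M" using mfb ofb r MY0 al0 by (intro add_mono mult_mono) (auto simp: reg_def)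
    finally show ?thesis by (simp add: Bg_def)
  qed
  have P3: "norm (GG Y X - GG Y X') \<le> Lg * norm (X - X')" if r: "reg c M X" "reg c M X'" for X X'
  proof -
    define a where "a = lmin Y X"
    define b where "b = lmax Y X"
    define a' where "a' = lmin Y X'"
    define b' where "b' = lmax Y X'"
    define D where "D = norm (X - X')"
    have ab: "al \<le> a" "a \<le> b" "b \<le> be" using AB[OF r(1)] by (auto simp: a_def b_def)
    have ab': "al \<le> a'" "a' \<le> b'" "b' \<le> be" using AB[OF r(2)] by (auto simp: a'_def b'_def)
    have la: "\<bar>a - a'\<bar> \<le> La * D" "\<bar>b - b'\<bar> \<le> La * D"
      using lab_lip[OF r Y cY pos] by (simp_all add: a_def a'_def b_def b'_def La_def D_def MY_def)
    have s: "\<bar>a - a'\<bar> + \<bar>b - b'\<bar> \<le> 2 * La * D" using la by simp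
    have ml: "\<bar>mf a b - mf a' b'\<bar> \<le> (\<bar>a - a'\<bar> + \<bar>b - b'\<bar>) / al^2"
      by (rule mf_lip) (use al0 ab ab' in auto)
    also have "\<dots> \<le> (2 * La * D) / al^2" using s by (simp add: divide_right_mono)
    finally have ml2: "\<bar>mf a b - mf a' b'\<bar> \<le> (2 * La / al^2) * D" by simp
    have ol: "\<bar>ofn a b - ofn a' b'\<bar> \<le> (2 / al + be / al^2) * (\<bar>a - a'\<bar> + \<bar>b - b'\<bar>)"
      by (rule ofn_lip) (use al0 ab ab' in auto)
    also have "\<dots> \<le> (2 / al + be / al^2) * (2 * La * D)" using s al0 be1 by (intro mult_left_mono) auto
    finally have ol2: "\<bar>ofn a b - ofn a' b'\<bar> \<le> ((2 / al + be / al^2) * (2 * La)) * D" by simp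
    have ob': "\<bar>ofn a' b'\<bar> \<le> Ob" unfolding Ob_def by (rule ofn_bound) (use al0 al1 be1 ab' in auto)
    have eq: "GG Y X - GG Y X' = ((mf a b - mf a' b') *\<^sub>R Y + (ofn a b - ofn a' b') *\<^sub>R X) + ofn a' b' *\<^sub>R (X - X')"
      by (simp add: GG_def a_def b_def a'_def b'_def algebra_simps)
    have "norm (GG Y X - GG Y X') \<le> norm ((mf a b - mf a' b') *\<^sub>R Y + (ofn a b - ofn a' b') *\<^sub>R X) + norm (ofn a' b' *\<^sub>R (X - X'))"
      unfolding eq by (rule norm_triangle_ineq)
    also have "\<dots> \<le> (\<bar>mf a b - mf a' b'\<bar> * MY + \<bar>ofn a b - ofn a' b'\<bar> * norm X) + \<bar>ofn a' b'\<bar> * D"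
      using norm_comb[of "mf a b - mf a' b'" Y "ofn a b - ofn a' b'" X] by (simp add: MY_def D_def)
    also have "\<dots> \<le> (((2 * La / al^2) * D) * MY + (((2 / al + be / al^2) * (2 * La)) * D) * M) + Ob * D"
    proof -
      have D0: "0 \<le> D" by (simp add: D_def)
      have k1: "0 \<le> 2 / al + be / al^2" using al0 be1 by simp
      have n1: "0 \<le> ((2 / al + be / al^2) * (2 * La)) * D" using k1 La0 D0 by simp
      have n2: "0 \<le> (2 * La / al^2) * D" using La0 D0 by simp
      show ?thesis using ml2 ol2 ob' r MY0 n1 n2 by (intro add_mono mult_mono) (auto simp: reg_def D_def)
    qed
    also have "\<dots> = Lg * D" by (simp add: Lg_def algebra_simps)
    finally show ?thesis by (simp add: D_def)
  qed
  show ?thesis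
    apply (rule exI[of _ c'], rule exI[of _ M'], rule exI[of _ Ce], rule exI[of _ Bg], rule exI[of _ Lg])
    using c'0 M'0 Ce0 Bg0 Lg0 P1 P2 P3 by blast
qed



lemma qf_expand: "qf X x = (\<Sum>i\<in>UNIV. x $ i * (\<Sum>j\<in>UNIV. X $ i $ j * x $ j))"
  by (simp add: qf_def inner_vec_def matrix_vector_mult_def)

lemma qf_cont: "continuous_on S (\<lambda>p::((real^'n^'n) \<times> (real^'n)). qf (fst p) (snd p))"
  unfolding qf_expand continuous_on_def
  by (auto intro!: tendsto_intros)

lemma compact_lower:
  fixes K :: "(real^'n^'n) set"
  assumes "compact K" "\<forall>X\<in>K. spd X"
  shows "\<exists>c>0. \<forall>X\<in>K. \<forall>x. c * (norm x)^2 \<le> qf X x"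
proof (cases "K = {}")
  case True thus ?thesis by (intro exI[of _ 1]) auto
next
  case False
  define S where "S = K \<times> sphere (0::real^'n) 1"
  have cS: "compact S" unfolding S_def by (intro compact_Times assms(1) compact_sphere)
  have "sphere (0::real^'n) 1 \<noteq> {}" using vector_choose_size[of 1] by auto
  hence nS: "S \<noteq> {}" using False by (auto simp: S_def)
  from continuous_attains_inf[OF cS nS qf_cont] obtain p0 where p0: "p0 \<in> S"
    "\<And>y. y \<in> S \<Longrightarrow> qf (fst p0) (snd p0) \<le> qf (fst y) (snd y)" by blast
  define c where "c = qf (fst p0) (snd p0)"
  have "spd (fst p0)" "snd p0 \<noteq> 0" using p0(1) assms(2) by (auto simp: S_def)
  hence c0: "c > 0" unfolding c_def by (rule spd_qf_pos)
  have "\<forall>X\<in>K. \<forall>x. c * (norm x)^2 \<le> qf X x"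
  proof (intro ballI allI)
    fix X x assume X: "X \<in> K"
    show "c * (norm x)^2 \<le> qf X x"
    proof (cases "x = 0")
      case True thus ?thesis by simp
    next
      case False
      define u where "u = (1 / norm x) *\<^sub>R x"
      have uS: "(X, u) \<in> S" using False X by (simp add: u_def S_def)
      have xu: "x = norm x *\<^sub>R u" using False by (simp add: u_def)
      have "c \<le> qf X u" using p0(2)[OF uS] by (simp add: c_def)
      hence "(norm x)^2 * c \<le> (norm x)^2 * qf X u" by (intro mult_left_mono) auto
      thus ?thesis by (subst (2) xu) (simp add: qf_scale_vec algebra_simps)
    qed
  qed
  thus ?thesis using c0 by blast
qed

lemma reg_mono: "reg c M X \<Longrightarrow> c2 \<le> c \<Longrightarrow> M \<le> M2 \<Longrightarrow> reg c2 M2 X"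
  unfolding reg_def by (meson mult_right_mono order_trans zero_le_power2)

definition SP :: "real^'n^'n \<Rightarrow> real \<Rightarrow> real \<Rightarrow> real \<Rightarrow> real \<Rightarrow> real \<Rightarrow> real \<Rightarrow> real \<Rightarrow> bool" where
  "SP Y c M c' M' Ce Bg Lg \<longleftrightarrow>
   (\<forall>X t. reg c M X \<longrightarrow> 0 \<le> t \<longrightarrow> t \<le> 1/2 \<longrightarrow>
       reg c' M' (thompson X t Y) \<and> norm (thompson X t Y - X - t *\<^sub>R GG Y X) \<le> Ce * t^2) \<and>
   (\<forall>X. reg c M X \<longrightarrow> norm (GG Y X) \<le> Bg) \<and>
   (\<forall>X X'. reg c M X \<longrightarrow> reg c M X' \<longrightarrow> norm (GG Y X - GG Y X') \<le> Lg * norm (X - X'))"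

lemma SP_mono:
  fixes Y :: "real^'n^'n"
  assumes "SP Y c M c1 M1 Ce Bg Lg" "c2 \<le> c1" "M1 \<le> M2" "Ce \<le> Ce2" "Bg \<le> Bg2" "Lg \<le> Lg2"
  shows "SP Y c M c2 M2 Ce2 Bg2 Lg2"
  unfolding SP_def
proof (intro conjI allI impI)
  fix X :: "real^'n^'n" and t :: real assume h: "reg c M X" "0 \<le> t" "t \<le> 1/2"
  have a: "reg c1 M1 (thompson X t Y)" "norm (thompson X t Y - X - t *\<^sub>R GG Y X) \<le> Ce * t^2"
    using assms(1) h unfolding SP_def by blast+
  show "reg c2 M2 (thompson X t Y)" by (rule reg_mono[OF a(1) assms(2,3)])
  have "Ce * t^2 \<le> Ce2 * t^2" using assms(4) by (intro mult_right_mono) auto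
  thus "norm (thompson X t Y - X - t *\<^sub>R GG Y X) \<le> Ce2 * t^2" using a(2) by linarith
next
  fix X :: "real^'n^'n" assume h: "reg c M X"
  thus "norm (GG Y X) \<le> Bg2" using assms(1,5) unfolding SP_def by force
next
  fix X X' :: "real^'n^'n" assume h: "reg c M X" "reg c M X'"
  have "norm (GG Y X - GG Y X') \<le> Lg * norm (X - X')" using assms(1) h unfolding SP_def by blast
  also have "\<dots> \<le> Lg2 * norm (X - X')" using assms(6) by (intro mult_right_mono) auto
  finally show "norm (GG Y X - GG Y X') \<le> Lg2 * norm (X - X')" .
qed

lemma step_multi:
  fixes Ys :: "nat \<Rightarrow> real^'n^'n"
  assumes "finite J" "J \<noteq> {}" "\<forall>j\<in>J. spd (Ys j)" "\<forall>j\<in>J. \<forall>x. cY * (norm x)^2 \<le> qf (Ys j) x"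
    "0 < c" "0 < M" "0 < cY"
  shows "\<exists>c' M' Ce Bg Lg. 0 < c' \<and> 0 < M' \<and> 0 \<le> Ce \<and> 0 \<le> Bg \<and> 0 \<le> Lg \<and>
     (\<forall>j\<in>J. SP (Ys j) c M c' M' Ce Bg Lg)"
  using assms
proof (induction J rule: finite_ne_induct)
  case (singleton j)
  from step_lemma[of "Ys j" cY c M] singleton show ?case unfolding SP_def by auto
next
  case (insert j J)
  then obtain c1 M1 Ce1 Bg1 Lg1 where A: "0 < c1" "0 < M1" "0 \<le> Ce1" "0 \<le> Bg1" "0 \<le> Lg1"
    "\<forall>i\<in>J. SP (Ys i) c M c1 M1 Ce1 Bg1 Lg1" by auto
  have Yj: "spd (Ys j)" "\<forall>x. cY * (norm x)^2 \<le> qf (Ys j) x" using insert.prems by auto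
  have "\<exists>c' M' Ce Bg Lg. 0 < c' \<and> 0 < M' \<and> 0 \<le> Ce \<and> 0 \<le> Bg \<and> 0 \<le> Lg \<and> SP (Ys j) c M c' M' Ce Bg Lg"
    unfolding SP_def by (rule step_lemma[OF Yj insert.prems(3-5)])
  then obtain c2 M2 Ce2 Bg2 Lg2 where B: "0 < c2" "0 < M2" "0 \<le> Ce2" "0 \<le> Bg2" "0 \<le> Lg2"
    "SP (Ys j) c M c2 M2 Ce2 Bg2 Lg2" by blast
  have "\<forall>i\<in>insert j J. SP (Ys i) c M (min c1 c2) (max M1 M2) (max Ce1 Ce2) (max Bg1 Bg2) (max Lg1 Lg2)"
  proof
    fix i assume "i \<in> insert j J"
    then consider "i = j" | "i \<in> J" by blast
    thus "SP (Ys i) c M (min c1 c2) (max M1 M2) (max Ce1 Ce2) (max Bg1 Bg2) (max Lg1 Lg2)"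
    proof cases
      case 1 thus ?thesis using SP_mono[OF B(6)] by simp
    next
      case 2 thus ?thesis using SP_mono[of "Ys i" c M c1 M1 Ce1 Bg1 Lg1] A(6) by simp
    qed
  qed
  moreover have "0 < min c1 c2" "0 < max M1 M2" "0 \<le> max Ce1 Ce2" "0 \<le> max Bg1 Bg2" "0 \<le> max Lg1 Lg2"
    using A B by auto
  ultimately show ?case by blast
qed

lemma jidx_eq: "k \<ge> 1 \<Longrightarrow> m < k \<Longrightarrow> jidx k (p * k + m + 1) = m + 1"
proof -
  assume h: "k \<ge> 1" "m < k"
  have "p * k + m + 1 + k - 1 = m + (p + 1) * k" using h by (simp add: algebra_simps)
  hence "(p * k + m + 1 + k - 1) mod k = m" using h by simp
  thus ?thesis by (simp add: jidx_def)
qed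

lemma jidx_range: "k \<ge> 1 \<Longrightarrow> jidx k i \<in> {1..k}"
  using mod_less_divisor[of k "i + k - 1"] by (simp add: jidx_def Suc_le_eq)

lemma GG_coef: "GG (Ys j) X = m_coef Ys j X *\<^sub>R Ys j + o_coef Ys j X *\<^sub>R X"
  by (simp add: GG_def m_coef_def o_coef_def mf_def ofn_def lmin_def lmax_def Let_def)



lemma t_facts:
  fixes P K mm :: real
  assumes "1 \<le> P" "1 \<le> K" "0 \<le> mm" "mm + 1 \<le> K"
  shows "1 / (P * K + mm + 2) \<le> 1 / P" "1 / (P * K + mm + 2) \<le> 1 / 2"
    "(1 / (P * K + mm + 2))^2 \<le> (1 / P) * (1 / P)"
    "\<bar>1 / (P * K + mm + 2) - 1 / (P * K)\<bar> \<le> (K + 1) * ((1 / P) * (1 / P))"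
proof -
  have PK: "P \<le> P * K" using assms by (simp add: mult_le_cancel_left1)
  have D1: "P \<le> P * K + mm + 2" using PK assms by linarith
  show t1: "1 / (P * K + mm + 2) \<le> 1 / P" using D1 assms by (simp add: frac_le)
  have "2 \<le> P * K + mm + 2" using PK assms by linarith
  thus "1 / (P * K + mm + 2) \<le> 1 / 2" by (simp add: frac_le)
  have t0: "0 \<le> 1 / (P * K + mm + 2)" using D1 assms by simp
  show "(1 / (P * K + mm + 2))^2 \<le> (1 / P) * (1 / P)"
    unfolding power2_eq_square by (rule mult_mono[OF t1 t1]) (use t0 assms in auto)
  have pos: "0 < P * K" using assms by simp
  have e: "1 / (P * K) - 1 / (P * K + mm + 2) = (mm + 2) / ((P * K) * (P * K + mm + 2))"
  proof -
    have nz: "P * K \<noteq> 0" "P * K + mm + 2 \<noteq> 0" using pos assms by linarith+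
    show ?thesis unfolding diff_frac_eq[OF nz] by (simp add: algebra_simps)
  qed
  have ge: "1 / (P * K + mm + 2) \<le> 1 / (P * K)" using pos assms by (simp add: frac_le)
  have "P * P \<le> (P * K) * (P * K + mm + 2)" by (rule mult_mono[OF PK D1]) (use assms in auto)
  hence "(mm + 2) / ((P * K) * (P * K + mm + 2)) \<le> (K + 1) / (P * P)"
    by (intro frac_le) (use assms in auto)
  hence "\<bar>1 / (P * K + mm + 2) - 1 / (P * K)\<bar> \<le> (K + 1) / (P * P)" using e ge by simp
  thus "\<bar>1 / (P * K + mm + 2) - 1 / (P * K)\<bar> \<le> (K + 1) * ((1 / P) * (1 / P))" by simp
qed

lemma norm4: "norm (a + b + c + d) \<le> norm a + norm b + norm c + norm (d::'a::real_normed_vector)"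
  using norm_triangle_ineq[of "a + b + c" d] norm_triangle_ineq[of "a + b" c] norm_triangle_ineq[of a b]
  by linarith

theorem lemma4p9:
  fixes Ys :: "nat \<Rightarrow> real^'n^'n" and k :: nat and Xs :: "real^'n^'n"
    and K :: "(real^'n^'n) set"
  assumes "k \<ge> 1"
    and "\<forall>j\<in>{1..k}. spd (Ys j)"
    and "spd Xs"
    and "(\<Sum>j=1..k. m_coef Ys j Xs *\<^sub>R Ys j) + (\<Sum>j=1..k. o_coef Ys j Xs) *\<^sub>R Xs = 0"
    and "K \<subseteq> {X. spd X \<and> norm X = norm Xs}"
    and "compact K"
    and "Xs \<in> K"
  shows "\<exists>I L. I > 0 \<and> L > 0 \<and>
    (\<forall>Xh\<in>K. \<forall>p::nat. p \<ge> 1 \<longrightarrow>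
      \<bar>norm (T_map Ys k p Xh) / norm Xs - 1\<bar> \<le> L / real p * norm (Xh - Xs) + I / (real p)^2)"
proof -
  note k1 = assms(1)
  define J where "J = {1..k}"
  have Jf: "finite J" and Jne: "J \<noteq> {}" using k1 by (auto simp: J_def)
  have spdJ: "\<forall>j\<in>J. spd (Ys j)" using assms(2) by (simp add: J_def)
  obtain cY where cY0: "cY > 0" and cYb: "\<forall>X\<in>Ys ` J. \<forall>x. cY * (norm x)^2 \<le> qf X x"
    using compact_lower[of "Ys ` J"] Jf spdJ finite_imp_compact by blast
  have cYJ: "\<forall>j\<in>J. \<forall>x. cY * (norm x)^2 \<le> qf (Ys j) x" using cYb by blast
  have spdK: "\<forall>X\<in>K. spd X" using assms(5) by blast
  obtain c0 where c00: "c0 > 0" and c0b: "\<forall>X\<in>K. \<forall>x. c0 * (norm x)^2 \<le> qf X x"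
    using compact_lower[OF assms(6) spdK] by blast
  define M0 where "M0 = norm Xs"
  have M00: "M0 > 0"
  proof -
    obtain x :: "real^'n" where "norm x = 1" using vector_choose_size[of 1] by auto
    hence "x \<noteq> 0" by auto
    hence "qf Xs x > 0" by (rule spd_qf_pos[OF assms(3)])
    hence "Xs \<noteq> 0" by (auto simp: qf_def)
    thus ?thesis by (simp add: M0_def)
  qed
  have regK: "reg c0 M0 X" if "X \<in> K" for X
    using that assms(5) c0b by (auto simp: reg_def M0_def)
  define XX where "XX p m Xh = T_part Ys k p m Xh" for p m Xh
  define tt where "tt p m = 1 / (real (p * k + m + 1) + 1)" for p m
  have XXS: "XX p (Suc m) Xh = thompson (XX p m Xh) (tt p m) (Ys (jidx k (p * k + m + 1)))" for p m Xh
    by (simp add: XX_def tt_def S_map_def)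
  have tt0: "0 \<le> tt p m" "tt p m \<le> 1/2" for p m
  proof -
    have h: "2 \<le> real (p * k + m + 1) + 1" by simp
    show "0 \<le> tt p m" unfolding tt_def by simp
    show "tt p m \<le> 1/2" unfolding tt_def by (rule frac_le) (use h in auto)
  qed
  have jJ: "jidx k i \<in> J" for i using jidx_range[OF k1] by (simp add: J_def)
  have claimA: "\<exists>c M. 0 < c \<and> 0 < M \<and> (\<forall>m\<le>N. \<forall>Xh\<in>K. \<forall>p. reg c M (XX p m Xh))" for N
  proof (induction N)
    case 0
    show ?case using c00 M00 regK by (intro exI[of _ c0] exI[of _ M0]) (auto simp: XX_def)
  next
    case (Suc N)
    then obtain c M where cM: "0 < c" "0 < M" "\<forall>m\<le>N. \<forall>Xh\<in>K. \<forall>p. reg c M (XX p m Xh)" by blast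
    obtain c' M' Ce Bg Lg where S: "0 < c'" "0 < M'" "\<forall>j\<in>J. SP (Ys j) c M c' M' Ce Bg Lg"
      using step_multi[OF Jf Jne spdJ cYJ cM(1,2) cY0] by blast
    have "\<forall>m\<le>Suc N. \<forall>Xh\<in>K. \<forall>p. reg (min c c') (max M M') (XX p m Xh)"
    proof (intro allI impI ballI)
      fix m Xh p assume m: "m \<le> Suc N" and Xh: "Xh \<in> K"
      show "reg (min c c') (max M M') (XX p m Xh)"
      proof (cases "m \<le> N")
        case True
        have "reg c M (XX p m Xh)" using cM(3) True Xh by blast
        thus ?thesis by (rule reg_mono) auto
      next
        case False
        hence mN: "m = Suc N" using m by simp
        have r: "reg c M (XX p N Xh)" using cM(3) Xh by blast
        have "SP (Ys (jidx k (p * k + N + 1))) c M c' M' Ce Bg Lg" using S(3) jJ by blast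
        hence "reg c' M' (thompson (XX p N Xh) (tt p N) (Ys (jidx k (p * k + N + 1))))"
          using r tt0 unfolding SP_def by blast
        thus ?thesis unfolding mN XXS by (rule reg_mono) auto
      qed
    qed
    thus ?case using cM S by (intro exI[of _ "min c c'"] exI[of _ "max M M'"]) auto
  qed
  obtain c1 M1 where cM1: "0 < c1" "0 < M1" "\<forall>m\<le>k. \<forall>Xh\<in>K. \<forall>p. reg c1 M1 (XX p m Xh)"
    using claimA[of k] by blast
  obtain c' M' Ce Bg Lg where SP1: "0 \<le> Ce" "0 \<le> Bg" "0 \<le> Lg" "\<forall>j\<in>J. SP (Ys j) c1 M1 c' M' Ce Bg Lg"
    using step_multi[OF Jf Jne spdJ cYJ cM1(1,2) cY0] by blast
  have regXX: "reg c1 M1 (XX p m Xh)" if "m \<le> k" "Xh \<in> K" for p m Xh using cM1(3) that by blast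
  have regK1: "reg c1 M1 Xh" if "Xh \<in> K" for Xh using regXX[of 0 Xh 0] that by (simp add: XX_def)
  have stepE: "norm (XX p (Suc m) Xh - XX p m Xh - tt p m *\<^sub>R GG (Ys (Suc m)) (XX p m Xh)) \<le> Ce * (tt p m)^2"
    if "m < k" "Xh \<in> K" for p m Xh
  proof -
    have j: "jidx k (p * k + m + 1) = Suc m" using jidx_eq[OF k1 that(1)] by simp
    have "Suc m \<in> J" using that by (simp add: J_def)
    hence "SP (Ys (Suc m)) c1 M1 c' M' Ce Bg Lg" using SP1(4) by blast
    thus ?thesis using regXX[of m Xh p] that tt0[of p m] unfolding SP_def XXS j by auto
  qed
  have Gb: "norm (GG (Ys j) X) \<le> Bg" if "j \<in> J" "reg c1 M1 X" for j X
    using SP1(4) that unfolding SP_def by blast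
  have GL: "norm (GG (Ys j) X - GG (Ys j) X') \<le> Lg * norm (X - X')" if "j \<in> J" "reg c1 M1 X" "reg c1 M1 X'" for j X X'
    using SP1(4) that unfolding SP_def by blast
  define E where "E = Ce + Lg * real k * (Bg + Ce) + Bg * (real k + 1)"
  have E0: "0 \<le> E" using SP1 by (simp add: E_def)
  have claimB: "m \<le> k \<longrightarrow> norm (XX p m Xh - Xh) \<le> real m * (Bg + Ce) * (1 / real p) \<and>
      norm (XX p m Xh - Xh - (1 / (real p * real k)) *\<^sub>R (\<Sum>i<m. GG (Ys (Suc i)) Xh))
        \<le> real m * E * ((1 / real p) * (1 / real p))"
    if Xh: "Xh \<in> K" and p1: "p \<ge> 1" for Xh p m
  proof (induction m)
    case 0 show ?case by (simp add: XX_def)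
  next
    case (Suc m)
    show ?case
    proof
      assume mk: "Suc m \<le> k"
      hence mk': "m < k" "m \<le> k" by auto
      have IH1: "norm (XX p m Xh - Xh) \<le> real m * (Bg + Ce) * (1 / real p)"
        and IH2: "norm (XX p m Xh - Xh - (1 / (real p * real k)) *\<^sub>R (\<Sum>i<m. GG (Ys (Suc i)) Xh))
        \<le> real m * E * ((1 / real p) * (1 / real p))" using Suc.IH mk'(2) by auto
      define v where "v = 1 / real p"
      define w where "w = v * v"
      define hh where "hh = 1 / (real p * real k)"
      define t where "t = tt p m"
      define Xm where "Xm = XX p m Xh"
      define X1 where "X1 = XX p (Suc m) Xh"
      define G where "G = GG (Ys (Suc m))"
      define S where "S = (\<Sum>i<m. GG (Ys (Suc i)) Xh)"
      have teq: "t = 1 / (real p * real k + real m + 2)" by (simp add: t_def tt_def algebra_simps)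
      have P1: "1 \<le> real p" using p1 by simp
      have K1: "1 \<le> real k" using k1 by simp
      have mK: "real m + 1 \<le> real k" using mk by linarith
      note tf = t_facts[OF P1 K1 _ mK, folded teq]
      have tv: "t \<le> v" using tf(1) by (simp add: v_def)
      have t2: "t^2 \<le> w" using tf(3) by (simp add: v_def w_def)
      have th: "\<bar>t - hh\<bar> \<le> (real k + 1) * w" using tf(4) by (simp add: v_def w_def hh_def)
      have t0: "0 \<le> t" using tt0 by (simp add: t_def)
      have v0: "0 \<le> v" "v \<le> 1" using P1 by (auto simp: v_def)
      have w0: "0 \<le> w" "w \<le> v" using v0 by (auto simp: w_def mult_left_le_one_le)
      have jJ': "Suc m \<in> J" using mk by (simp add: J_def)
      have rXm: "reg c1 M1 Xm" unfolding Xm_def by (rule regXX[OF mk'(2) Xh])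
      have rXh: "reg c1 M1 Xh" by (rule regK1[OF Xh])
      have e1: "norm (X1 - Xm - t *\<^sub>R G Xm) \<le> Ce * w"
      proof -
        have "norm (X1 - Xm - t *\<^sub>R G Xm) \<le> Ce * t^2"
          using stepE[OF mk'(1) Xh, of p] by (simp add: X1_def Xm_def t_def G_def)
        also have "\<dots> \<le> Ce * w" using t2 SP1(1) by (intro mult_left_mono) auto
        finally show ?thesis .
      qed
      have gXm: "norm (G Xm) \<le> Bg" unfolding G_def by (rule Gb[OF jJ' rXm])
      have gXh: "norm (G Xh) \<le> Bg" unfolding G_def by (rule Gb[OF jJ' rXh])
      have lip: "norm (G Xm - G Xh) \<le> Lg * (real m * (Bg + Ce) * v)"
      proof -
        have "norm (G Xm - G Xh) \<le> Lg * norm (Xm - Xh)" unfolding G_def by (rule GL[OF jJ' rXm rXh])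
        also have "\<dots> \<le> Lg * (real m * (Bg + Ce) * v)" using IH1 SP1(3) by (intro mult_left_mono) (auto simp: Xm_def v_def)
        finally show ?thesis .
      qed
      have tg: "t * norm (G Xm) \<le> v * Bg" using tv gXm t0 SP1(2) by (intro mult_mono) auto
      have "norm (X1 - Xh) \<le> norm (Xm - Xh) + norm (X1 - Xm - t *\<^sub>R G Xm) + norm (t *\<^sub>R G Xm)"
        using norm_triangle_ineq[of "(Xm - Xh) + (X1 - Xm - t *\<^sub>R G Xm)" "t *\<^sub>R G Xm"]
          norm_triangle_ineq[of "Xm - Xh" "X1 - Xm - t *\<^sub>R G Xm"] by (simp add: algebra_simps)
      also have "\<dots> \<le> real m * (Bg + Ce) * v + Ce * w + v * Bg"
        using IH1 e1 tg t0 by (simp add: Xm_def v_def)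
      also have "\<dots> \<le> real (Suc m) * (Bg + Ce) * v"
      proof -
        have "Ce * w \<le> Ce * v" using w0 SP1(1) by (intro mult_left_mono) auto
        thus ?thesis by (simp add: algebra_simps)
      qed
      finally have part1: "norm (X1 - Xh) \<le> real (Suc m) * (Bg + Ce) * v" .
      have dec: "X1 - Xh - hh *\<^sub>R (S + G Xh) = (Xm - Xh - hh *\<^sub>R S) + (X1 - Xm - t *\<^sub>R G Xm) + t *\<^sub>R (G Xm - G Xh) + (t - hh) *\<^sub>R G Xh"
        by (simp add: algebra_simps)
      have a3: "norm (t *\<^sub>R (G Xm - G Xh)) \<le> Lg * real k * (Bg + Ce) * w"
      proof -
        have "norm (t *\<^sub>R (G Xm - G Xh)) = t * norm (G Xm - G Xh)" using t0 by simp
        also have "\<dots> \<le> v * (Lg * (real m * (Bg + Ce) * v))" using tv lip t0 by (intro mult_mono) auto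
        also have "\<dots> \<le> v * (Lg * (real k * (Bg + Ce) * v))"
          using mK SP1 v0 by (intro mult_left_mono mult_right_mono) auto
        also have "\<dots> = Lg * real k * (Bg + Ce) * w" by (simp add: w_def algebra_simps)
        finally show ?thesis .
      qed
      have a4: "norm ((t - hh) *\<^sub>R G Xh) \<le> Bg * (real k + 1) * w"
      proof -
        have "norm ((t - hh) *\<^sub>R G Xh) = \<bar>t - hh\<bar> * norm (G Xh)" by simp
        also have "\<dots> \<le> ((real k + 1) * w) * Bg" using th gXh w0 by (intro mult_mono) auto
        finally show ?thesis by (simp add: algebra_simps)
      qed
      have a1: "norm (Xm - Xh - hh *\<^sub>R S) \<le> real m * E * w"
        using IH2 by (simp add: Xm_def hh_def S_def w_def v_def)
      have "norm (X1 - Xh - hh *\<^sub>R (S + G Xh)) \<le> real m * E * w + Ce * w + Lg * real k * (Bg + Ce) * w + Bg * (real k + 1) * w"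
        unfolding dec using norm4[of "Xm - Xh - hh *\<^sub>R S" "X1 - Xm - t *\<^sub>R G Xm" "t *\<^sub>R (G Xm - G Xh)" "(t - hh) *\<^sub>R G Xh"]
          a1 e1 a3 a4 by linarith
      also have "\<dots> = real (Suc m) * E * w" by (simp add: E_def algebra_simps)
      finally have part2: "norm (X1 - Xh - hh *\<^sub>R (S + G Xh)) \<le> real (Suc m) * E * w" .
      show "norm (XX p (Suc m) Xh - Xh) \<le> real (Suc m) * (Bg + Ce) * (1 / real p) \<and>
        norm (XX p (Suc m) Xh - Xh - (1 / (real p * real k)) *\<^sub>R (\<Sum>i<Suc m. GG (Ys (Suc i)) Xh))
        \<le> real (Suc m) * E * ((1 / real p) * (1 / real p))"
        using part1 part2 by (simp add: X1_def v_def w_def hh_def S_def G_def)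
    qed
  qed
  define nX where "nX = norm Xs"
  have nX0: "0 < nX" using M00 by (simp add: nX_def M0_def)
  define F where "F X = (\<Sum>j\<in>J. GG (Ys j) X)" for X
  have FXs: "F Xs = 0"
  proof -
    have "F Xs = (\<Sum>j=1..k. m_coef Ys j Xs *\<^sub>R Ys j) + (\<Sum>j=1..k. o_coef Ys j Xs) *\<^sub>R Xs"
      by (simp add: F_def J_def GG_coef sum.distrib scaleR_sum_left)
    thus ?thesis using assms(4) by simp
  qed
  have Fsum: "(\<Sum>i<k. GG (Ys (Suc i)) X) = F X" for X
    by (simp add: F_def J_def sum.atLeast1_atMost_eq)
  have cardJ: "card J = k" by (simp add: J_def)
  have FL: "norm (F Xh) \<le> real k * Lg * norm (Xh - Xs)" if Xh: "Xh \<in> K" for Xh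
  proof -
    have "F Xh = F Xh - F Xs" using FXs by simp
    also have "\<dots> = (\<Sum>j\<in>J. GG (Ys j) Xh - GG (Ys j) Xs)" by (simp add: F_def sum_subtractf)
    finally have "norm (F Xh) = norm (\<Sum>j\<in>J. GG (Ys j) Xh - GG (Ys j) Xs)" by simp
    also have "\<dots> \<le> (\<Sum>j\<in>J. norm (GG (Ys j) Xh - GG (Ys j) Xs))" by (rule norm_sum)
    also have "\<dots> \<le> (\<Sum>j\<in>J. Lg * norm (Xh - Xs))"
      by (rule sum_mono) (rule GL, auto intro: regK1 Xh assms(7))
    also have "\<dots> = real k * Lg * norm (Xh - Xs)" using cardJ by simp
    finally show ?thesis .
  qed
  define L where "L = (Lg + 1) / nX"
  define I where "I = (real k * E + 1) / nX"
  have L0: "L > 0" using SP1 nX0 by (simp add: L_def)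
  have I0: "I > 0"
  proof -
    have "0 \<le> real k * E" using E0 by simp
    hence "0 < real k * E + 1" by linarith
    thus ?thesis using nX0 by (simp add: I_def)
  qed
  have main: "\<bar>norm (T_map Ys k p Xh) / norm Xs - 1\<bar> \<le> L / real p * norm (Xh - Xs) + I / (real p)^2"
    if Xh: "Xh \<in> K" and p1: "p \<ge> 1" for Xh p
  proof -
    define v where "v = 1 / real p"
    define w where "w = v * v"
    define D where "D = norm (Xh - Xs)"
    have P1: "1 \<le> real p" using p1 by simp
    have v0: "0 \<le> v" using P1 by (simp add: v_def)
    have B: "norm (XX p k Xh - Xh - (1 / (real p * real k)) *\<^sub>R F Xh) \<le> real k * E * w"
      using claimB[OF Xh p1, of k] by (simp add: Fsum v_def w_def)
    have hF: "norm ((1 / (real p * real k)) *\<^sub>R F Xh) \<le> Lg * D * v"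
    proof -
      have "norm ((1 / (real p * real k)) *\<^sub>R F Xh) = (1 / (real p * real k)) * norm (F Xh)" by simp
      also have "\<dots> \<le> (1 / (real p * real k)) * (real k * Lg * D)"
        using FL[OF Xh] by (intro mult_left_mono) (auto simp: D_def)
      also have "\<dots> = Lg * D * v" using k1 by (simp add: v_def field_simps)
      finally show ?thesis .
    qed
    have nd: "norm (XX p k Xh - Xh) \<le> real k * E * w + Lg * D * v"
      using norm_triangle_ineq[of "XX p k Xh - Xh - (1 / (real p * real k)) *\<^sub>R F Xh" "(1 / (real p * real k)) *\<^sub>R F Xh"] B hF
      by simp
    have nXh: "norm Xh = nX" using Xh assms(5) by (auto simp: nX_def)
    have "\<bar>norm (XX p k Xh) / nX - 1\<bar> = \<bar>norm (XX p k Xh) - norm Xh\<bar> / nX"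
    proof -
      have "norm (XX p k Xh) / nX - 1 = (norm (XX p k Xh) - nX) / nX" using nX0 by (simp add: diff_divide_distrib)
      thus ?thesis using nX0 nXh by (simp add: abs_divide)
    qed
    also have "\<dots> \<le> norm (XX p k Xh - Xh) / nX"
      by (rule divide_right_mono[OF norm_triangle_ineq3]) (use nX0 in simp)
    also have "\<dots> \<le> (real k * E * w + Lg * D * v) / nX" by (rule divide_right_mono[OF nd]) (use nX0 in simp)
    also have "\<dots> \<le> ((real k * E + 1) * w + (Lg + 1) * D * v) / nX"
    proof (rule divide_right_mono)
      have "0 \<le> w" using v0 by (simp add: w_def)
      moreover have "0 \<le> D * v" using v0 by (simp add: D_def)
      ultimately show "real k * E * w + Lg * D * v \<le> (real k * E + 1) * w + (Lg + 1) * D * v"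
        by (simp add: algebra_simps)
    qed (use nX0 in simp)
    also have "\<dots> = L / real p * D + I / (real p)^2"
    proof -
      have pz: "real p \<noteq> 0" using P1 by simp
      have nz: "nX \<noteq> 0" using nX0 by simp
      show ?thesis using pz nz by (simp add: L_def I_def v_def w_def D_def field_simps power2_eq_square)
    qed
    finally show ?thesis by (simp add: T_map_def XX_def nX_def D_def)
  qed
  show ?thesis using L0 I0 main by blast

qed


end
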